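(* Let $\sigma$ be $1$-Lipschitz and $\pi=\mathcal N(0,\rho_1^2\mathbf I_{D_0D_1})\otimes\mathcal N(0,\rho_2^2\mathbf I_{D_1D_2})$ with $\rho_1,\rho_2>0$; let $\beta>0$, $n\ge1$, and set $B_\ell=\rho_\ell\sqrt{2D_{\ell-1}D_\ell}$ for $\ell=1,2$. (i) If $|\sigma(u)|\le M_\sigma$ for all $u$, then $$\sup_{\bar w:\ \|\bar w_\ell\|_F\le B_\ell,\ \ell=1,2}\mathrm{Rem}_n(\bar w)\le\frac{\beta d}{n}\log\Big(3+\frac{3nB_2^2(B_1^2M_2^2+\mu(\mathcal X)M_\sigma^2)}{d\beta}\Big).$$ (ii) If $\sigma$ is unbounded but $\sigma(0)=0$, then $$\sup_{\bar w:\ \|\bar w_\ell\|_F\le B_\ell,\ \ell=1,2}\mathrm{Rem}_n(\bar w)\le\frac{\beta d}{n}\log\Big(3+\frac{3nB_1^2B_2^2(M_2^2+\bar M_2^2/D_1)}{d\beta}\Big).$$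
   Context: $\mathcal X\subset\mathbb R^{D_0}$ Borel, $\mu$ a $\sigma$-finite measure with $M_2^2=D_0^{-1}\int\|x\|_2^2\mu(dx)<\infty$, $\bar M_2^2=\|\int xx^\top\mu(dx)\|_{\mathrm{sp}}$, $\|f\|^2_{\mathbb L_2(\mu)}=\int\|f(x)\|_2^2\mu(dx)$. Parameters $w=(w_1,w_2)\in\mathsf W=\mathbb R^{D_0\times D_1}\times\mathbb R^{D_1\times D_2}$, $d=D_0D_1+D_1D_2$, $f_w(x)=w_2^\top\bar\sigma(w_1^\top x)$ with $\bar\sigma$ coordinatewise; $\|\cdot\|_F$ Frobenius norm. $\mathcal P_1(\mathcal F_{\mathsf W})$ is the set of probability measures $p$ on $\mathsf W$ with $\int\|f_w(x)\|_2p(dw)<\infty$ for all $x$, and $\mathrm{Rem}_n(\bar w)=\inf_{p\in\mathcal P_1(\mathcal F_{\mathsf W})}\{\int\|f_w-f_{\bar w}\|^2_{\mathbb L_2(\mu)}p(dw)+\frac{\beta}{n}D_{\mathrm{KL}}(p\|\pi)\}$. *)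

theory Defs
  imports "HOL-Probability.Probability"
begin

text \<open>Two-layer network f_w(x) = w2^T sigmabar(w1^T x), with
  w1 a D0 x D1 matrix (type real^'n1^'n0) and w2 a D1 x D2 matrix (real^'n2^'n1).\<close>

definition sigbar :: "(real \<Rightarrow> real) \<Rightarrow> real^'k \<Rightarrow> real^'k" where
  "sigbar \<sigma> z = (\<chi> j. \<sigma> (z $ j))"

definition fnet :: "(real \<Rightarrow> real) \<Rightarrow> (real^'n1^'n0) \<times> (real^'n2^'n1) \<Rightarrow> real^'n0 \<Rightarrow> real^'n2" where
  "fnet \<sigma> w x = transpose (snd w) *v sigbar \<sigma> (transpose (fst w) *v x)"

definition gauss_mat_density :: "real \<Rightarrow> real^'b^'a \<Rightarrow> real" where
  "gauss_mat_density \<rho> A = (\<Prod>i\<in>UNIV. \<Prod>j\<in>UNIV. normal_density 0 \<rho> (A $ i $ j))"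

definition gauss_prior :: "real \<Rightarrow> real \<Rightarrow> ((real^'n1^'n0) \<times> (real^'n2^'n1)) measure" where
  "gauss_prior \<rho>1 \<rho>2 = density lborel
     (\<lambda>w. ennreal (gauss_mat_density \<rho>1 (fst w) * gauss_mat_density \<rho>2 (snd w)))"

definition KL_div :: "'a measure \<Rightarrow> 'a measure \<Rightarrow> ennreal" where
  "KL_div p q = (if absolutely_continuous q p \<and> sets p = sets q
     then (\<integral>\<^sup>+ w. ennreal (let t = enn2real (RN_deriv q p w) in t * ln t - t + 1) \<partial>q)
     else \<infinity>)"

definition P1 :: "(real \<Rightarrow> real) \<Rightarrow> (real^'n0) set \<Rightarrow> ((real^'n1^'n0) \<times> (real^'n2^'n1)) measure set" where
  "P1 \<sigma> X = {p. prob_space p \<and> sets p = sets borel \<and>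
      (\<forall>x\<in>X. (\<integral>\<^sup>+ w. ennreal (norm (fnet \<sigma> w x)) \<partial>p) < \<infinity>)}"

definition L2dist_sq :: "(real^'n0) measure \<Rightarrow> (real \<Rightarrow> real)
    \<Rightarrow> (real^'n1^'n0) \<times> (real^'n2^'n1) \<Rightarrow> (real^'n1^'n0) \<times> (real^'n2^'n1) \<Rightarrow> ennreal" where
  "L2dist_sq \<mu> \<sigma> w w' = (\<integral>\<^sup>+ x. ennreal ((norm (fnet \<sigma> w x - fnet \<sigma> w' x))\<^sup>2) \<partial>\<mu>)"

definition Rem :: "real \<Rightarrow> nat \<Rightarrow> (real^'n0) set \<Rightarrow> (real^'n0) measure \<Rightarrow> (real \<Rightarrow> real)
    \<Rightarrow> ((real^'n1^'n0) \<times> (real^'n2^'n1)) measure \<Rightarrow> (real^'n1^'n0) \<times> (real^'n2^'n1) \<Rightarrow> ennreal" where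
  "Rem \<beta> n X \<mu> \<sigma> \<pi> wb = (INF p\<in>P1 \<sigma> X.
      (\<integral>\<^sup>+ w. L2dist_sq \<mu> \<sigma> w wb \<partial>p) + ennreal (\<beta> / real n) * KL_div p \<pi>)"

definition M2sq :: "(real^'n0) measure \<Rightarrow> real" where
  "M2sq \<mu> = enn2real (\<integral>\<^sup>+ x. ennreal ((norm x)\<^sup>2) \<partial>\<mu>) / real CARD('n0)"

definition outer :: "real^'n \<Rightarrow> real^'n^'n" where
  "outer x = (\<chi> i j. x $ i * x $ j)"

definition Mbar2sq :: "(real^'n0) measure \<Rightarrow> real" where
  "Mbar2sq \<mu> = onorm (\<lambda>v. (\<integral>x. outer x \<partial>\<mu>) *v v)"

end

theory Submission
  imports Defs
begin

lemma psf_lborel: "product_sigma_finite (\<lambda>_. lborel :: real measure)"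
  unfolding product_sigma_finite_def by (simp add: lborel.sigma_finite_measure_axioms)

lemma integral_lborel_prod:
  fixes f :: "'e::euclidean_space \<Rightarrow> real \<Rightarrow> real"
  assumes int: "\<And>b. b \<in> Basis \<Longrightarrow> integrable lborel (f b)"
  shows "(\<integral>x. (\<Prod>b\<in>Basis. f b (x \<bullet> b)) \<partial>(lborel::'e measure)) = (\<Prod>b\<in>Basis. \<integral>x. f b x \<partial>lborel)"
    and "integrable (lborel::'e measure) (\<lambda>x. \<Prod>b\<in>Basis. f b (x \<bullet> b))"
proof -
  have fm[measurable]: "\<And>b. b \<in> Basis \<Longrightarrow> f b \<in> borel_measurable borel"
    using borel_measurable_integrable[OF int] by simp
  have m: "(\<lambda>x::'e. \<Prod>b\<in>Basis. f b (x \<bullet> b)) \<in> borel_measurable borel"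
    by measurable
  have mm: "(\<lambda>g. \<Sum>b\<in>Basis. g b *\<^sub>R b) \<in> measurable (\<Pi>\<^sub>M b\<in>Basis. (lborel::real measure)) (borel::'e measure)"
    by measurable
  have eq: "\<And>g. g \<in> space (\<Pi>\<^sub>M b\<in>Basis. (lborel::real measure)) \<Longrightarrow>
      (\<Prod>b\<in>Basis. f b ((\<Sum>c\<in>Basis. g c *\<^sub>R c) \<bullet> b)) = (\<Prod>b\<in>Basis. f b (g b))"
    by (intro prod.cong refl) (simp add: inner_sum_left inner_Basis if_distrib cong: if_cong)
  have "(\<integral>x. (\<Prod>b\<in>Basis. f b (x \<bullet> b)) \<partial>(lborel::'e measure)) =
     (\<integral>g. (\<Prod>b\<in>Basis. f b ((\<Sum>c\<in>Basis. g c *\<^sub>R c) \<bullet> b)) \<partial>(\<Pi>\<^sub>M b\<in>(Basis::'e set). (lborel::real measure)))"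
    by (subst lborel_eq) (rule integral_distr[OF mm m])
  also have "\<dots> = (\<integral>g. (\<Prod>b\<in>Basis. f b (g b)) \<partial>(\<Pi>\<^sub>M b\<in>(Basis::'e set). (lborel::real measure)))"
    by (rule Bochner_Integration.integral_cong[OF refl eq])
  also have "\<dots> = (\<Prod>b\<in>Basis. \<integral>x. f b x \<partial>lborel)"
    by (rule product_sigma_finite.product_integral_prod[OF psf_lborel]) (auto intro: int)
  finally show "(\<integral>x. (\<Prod>b\<in>Basis. f b (x \<bullet> b)) \<partial>(lborel::'e measure)) = (\<Prod>b\<in>Basis. \<integral>x. f b x \<partial>lborel)" .
  have "integrable (\<Pi>\<^sub>M b\<in>(Basis::'e set). (lborel::real measure)) (\<lambda>g. \<Prod>b\<in>Basis. f b (g b))"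
    by (rule product_sigma_finite.product_integrable_prod[OF psf_lborel]) (auto intro: int)
  then have "integrable (\<Pi>\<^sub>M b\<in>(Basis::'e set). (lborel::real measure)) (\<lambda>g. \<Prod>b\<in>Basis. f b ((\<Sum>c\<in>Basis. g c *\<^sub>R c) \<bullet> b))"
    using Bochner_Integration.integrable_cong[OF refl, of "\<Pi>\<^sub>M b\<in>(Basis::'e set). (lborel::real measure)"
        "\<lambda>g. \<Prod>b\<in>Basis. f b ((\<Sum>c\<in>Basis. g c *\<^sub>R c) \<bullet> b)" "\<lambda>g. \<Prod>b\<in>Basis. f b (g b)"] eq
    by blast
  then show "integrable (lborel::'e measure) (\<lambda>x. \<Prod>b\<in>Basis. f b (x \<bullet> b))"
    by (subst lborel_eq) (simp add: integrable_distr_eq[OF mm m])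
qed


lemma nd_facts:
  fixes \<mu> \<sigma> :: real assumes "0 < \<sigma>"
  shows "integrable lborel (normal_density \<mu> \<sigma>)"
    and "(\<integral>y. normal_density \<mu> \<sigma> y \<partial>lborel) = 1"
    and "integrable lborel (\<lambda>y. normal_density \<mu> \<sigma> y * (y - \<mu>))"
    and "(\<integral>y. normal_density \<mu> \<sigma> y * (y - \<mu>) \<partial>lborel) = 0"
    and "integrable lborel (\<lambda>y. normal_density \<mu> \<sigma> y * (y - \<mu>)\<^sup>2)"
    and "(\<integral>y. normal_density \<mu> \<sigma> y * (y - \<mu>)\<^sup>2 \<partial>lborel) = \<sigma>\<^sup>2"
proof -
  show "integrable lborel (normal_density \<mu> \<sigma>)" using assms by simp
  show "(\<integral>y. normal_density \<mu> \<sigma> y \<partial>lborel) = 1" using assms by simp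
  show "integrable lborel (\<lambda>y. normal_density \<mu> \<sigma> y * (y - \<mu>))"
    using integrable_normal_moment[OF assms, of \<mu> 1] by simp
  show "(\<integral>y. normal_density \<mu> \<sigma> y * (y - \<mu>) \<partial>lborel) = 0"
    using integral_normal_moment_odd[OF assms, of \<mu> 0] by simp
  show "integrable lborel (\<lambda>y. normal_density \<mu> \<sigma> y * (y - \<mu>)\<^sup>2)"
    using integrable_normal_moment[OF assms, of \<mu> 2] by simp
  show "(\<integral>y. normal_density \<mu> \<sigma> y * (y - \<mu>)\<^sup>2 \<partial>lborel) = \<sigma>\<^sup>2"
    using integral_normal_moment_even[OF assms, of \<mu> 1] by (simp add: power2_eq_square)
qed

definition gd :: "'e::euclidean_space \<Rightarrow> ('e \<Rightarrow> real) \<Rightarrow> 'e \<Rightarrow> real" where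
  "gd m s w = (\<Prod>b\<in>Basis. normal_density (m \<bullet> b) (s b) (w \<bullet> b))"

lemma gd_nonneg: "0 \<le> gd m s w"
  unfolding gd_def by (intro prod_nonneg) auto

lemma gd_pos: "(\<And>b. b \<in> Basis \<Longrightarrow> 0 < s b) \<Longrightarrow> 0 < gd m s w"
  unfolding gd_def by (intro prod_pos normal_density_pos) auto

lemma gd_measurable[measurable]: "gd m s \<in> borel_measurable borel"
  unfolding gd_def by measurable

lemma gd_expect_prod:
  fixes m :: "'e::euclidean_space"
  assumes "\<And>b. b \<in> Basis \<Longrightarrow> integrable lborel (\<lambda>y. normal_density (m \<bullet> b) (s b) y * k b y)"
  shows "integrable lborel (\<lambda>w. gd m s w * (\<Prod>b\<in>Basis. k b (w \<bullet> b)))"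
    and "(\<integral>w. gd m s w * (\<Prod>b\<in>Basis. k b (w \<bullet> b)) \<partial>lborel)
          = (\<Prod>b\<in>Basis. \<integral>y. normal_density (m \<bullet> b) (s b) y * k b y \<partial>lborel)"
proof -
  have eq: "(\<lambda>w. gd m s w * (\<Prod>b\<in>Basis. k b (w \<bullet> b))) =
      (\<lambda>w. \<Prod>b\<in>Basis. (\<lambda>b y. normal_density (m \<bullet> b) (s b) y * k b y) b (w \<bullet> b))"
    by (simp add: gd_def prod.distrib)
  show "integrable lborel (\<lambda>w. gd m s w * (\<Prod>b\<in>Basis. k b (w \<bullet> b)))"
    unfolding eq by (rule integral_lborel_prod(2)) (rule assms)
  show "(\<integral>w. gd m s w * (\<Prod>b\<in>Basis. k b (w \<bullet> b)) \<partial>lborel)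
          = (\<Prod>b\<in>Basis. \<integral>y. normal_density (m \<bullet> b) (s b) y * k b y \<partial>lborel)"
    unfolding eq by (rule integral_lborel_prod(1)) (rule assms)
qed

lemma gd_expect1:
  fixes m :: "'e::euclidean_space"
  assumes s: "\<And>b. b \<in> Basis \<Longrightarrow> 0 < s b" and ba: "ba \<in> Basis"
    and h: "integrable lborel (\<lambda>y. normal_density (m \<bullet> ba) (s ba) y * h y)"
  shows "integrable lborel (\<lambda>w. gd m s w * h (w \<bullet> ba))"
    and "(\<integral>w. gd m s w * h (w \<bullet> ba) \<partial>lborel) = (\<integral>y. normal_density (m \<bullet> ba) (s ba) y * h y \<partial>lborel)"
proof -
  define k where "k b = (if b = ba then h else (\<lambda>_. 1::real))" for b
  have pk: "(\<Prod>b\<in>Basis. k b (w \<bullet> b)) = h (w \<bullet> ba)" for w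
  proof -
    have "(\<Prod>b\<in>Basis. k b (w \<bullet> b)) = k ba (w \<bullet> ba) * (\<Prod>b\<in>Basis - {ba}. k b (w \<bullet> b))"
      using ba by (simp add: prod.remove)
    also have "(\<Prod>b\<in>Basis - {ba}. k b (w \<bullet> b)) = 1"
      by (intro prod.neutral) (auto simp: k_def)
    finally show ?thesis by (simp add: k_def)
  qed
  have ik: "integrable lborel (\<lambda>y. normal_density (m \<bullet> b) (s b) y * k b y)" if "b \<in> Basis" for b
    using h s[OF that] by (auto simp: k_def)
  show "integrable lborel (\<lambda>w. gd m s w * h (w \<bullet> ba))"
    using gd_expect_prod(1)[of m s k, OF ik] by (simp add: pk)
  have "(\<integral>w. gd m s w * h (w \<bullet> ba) \<partial>lborel) =
      (\<Prod>b\<in>Basis. \<integral>y. normal_density (m \<bullet> b) (s b) y * k b y \<partial>lborel)"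
    using gd_expect_prod(2)[of m s k, OF ik] by (simp add: pk)
  also have "\<dots> = (\<Prod>b\<in>Basis. if b = ba then (\<integral>y. normal_density (m \<bullet> ba) (s ba) y * h y \<partial>lborel) else 1)"
    by (intro prod.cong refl) (auto simp: k_def s)
  also have "\<dots> = (\<integral>y. normal_density (m \<bullet> ba) (s ba) y * h y \<partial>lborel)"
    using ba by (simp add: prod.If_cases Int_absorb1)
  finally show "(\<integral>w. gd m s w * h (w \<bullet> ba) \<partial>lborel) = (\<integral>y. normal_density (m \<bullet> ba) (s ba) y * h y \<partial>lborel)" .
qed

lemma gd_expect2:
  fixes m :: "'e::euclidean_space"
  assumes s: "\<And>b. b \<in> Basis \<Longrightarrow> 0 < s b" and ba: "ba \<in> Basis" and bb: "bb \<in> Basis" and ne: "ba \<noteq> bb"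
    and ha: "integrable lborel (\<lambda>y. normal_density (m \<bullet> ba) (s ba) y * ha y)"
    and hb: "integrable lborel (\<lambda>y. normal_density (m \<bullet> bb) (s bb) y * hb y)"
  shows "integrable lborel (\<lambda>w. gd m s w * (ha (w \<bullet> ba) * hb (w \<bullet> bb)))"
    and "(\<integral>w. gd m s w * (ha (w \<bullet> ba) * hb (w \<bullet> bb)) \<partial>lborel) =
       (\<integral>y. normal_density (m \<bullet> ba) (s ba) y * ha y \<partial>lborel) * (\<integral>y. normal_density (m \<bullet> bb) (s bb) y * hb y \<partial>lborel)"
proof -
  define k where "k b = (if b = ba then ha else if b = bb then hb else (\<lambda>_. 1::real))" for b
  have pk: "(\<Prod>b\<in>Basis. k b (w \<bullet> b)) = ha (w \<bullet> ba) * hb (w \<bullet> bb)" for w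
  proof -
    have "(\<Prod>b\<in>Basis. k b (w \<bullet> b)) = k ba (w \<bullet> ba) * (\<Prod>b\<in>Basis - {ba}. k b (w \<bullet> b))"
      using ba by (simp add: prod.remove)
    also have "(\<Prod>b\<in>Basis - {ba}. k b (w \<bullet> b)) = k bb (w \<bullet> bb) * (\<Prod>b\<in>Basis - {ba} - {bb}. k b (w \<bullet> b))"
      using bb ne by (intro prod.remove) auto
    also have "(\<Prod>b\<in>Basis - {ba} - {bb}. k b (w \<bullet> b)) = 1"
      by (intro prod.neutral) (auto simp: k_def)
    finally show ?thesis using ne by (simp add: k_def)
  qed
  have ik: "integrable lborel (\<lambda>y. normal_density (m \<bullet> b) (s b) y * k b y)" if "b \<in> Basis" for b
    using ha hb s[OF that] by (auto simp: k_def)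
  show "integrable lborel (\<lambda>w. gd m s w * (ha (w \<bullet> ba) * hb (w \<bullet> bb)))"
    using gd_expect_prod(1)[of m s k, OF ik] by (simp add: pk)
  define I where "I b = (\<integral>y. normal_density (m \<bullet> b) (s b) y * k b y \<partial>lborel)" for b
  have "(\<integral>w. gd m s w * (ha (w \<bullet> ba) * hb (w \<bullet> bb)) \<partial>lborel) = (\<Prod>b\<in>Basis. I b)"
    using gd_expect_prod(2)[of m s k, OF ik] by (simp add: pk I_def)
  also have "\<dots> = I ba * (\<Prod>b\<in>Basis - {ba}. I b)"
    using ba by (simp add: prod.remove)
  also have "(\<Prod>b\<in>Basis - {ba}. I b) = I bb * (\<Prod>b\<in>Basis - {ba} - {bb}. I b)"
    using bb ne by (intro prod.remove) auto
  also have "(\<Prod>b\<in>Basis - {ba} - {bb}. I b) = 1"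
    by (intro prod.neutral) (auto simp: k_def I_def s)
  finally show "(\<integral>w. gd m s w * (ha (w \<bullet> ba) * hb (w \<bullet> bb)) \<partial>lborel) =
       (\<integral>y. normal_density (m \<bullet> ba) (s ba) y * ha y \<partial>lborel) * (\<integral>y. normal_density (m \<bullet> bb) (s bb) y * hb y \<partial>lborel)"
    using ne by (simp add: I_def k_def)
qed

context
  fixes m :: "'e::euclidean_space" and s :: "'e \<Rightarrow> real"
  assumes s: "\<And>b. b \<in> Basis \<Longrightarrow> 0 < s b"
begin

lemma gd_one: "integrable lborel (gd m s)" "(\<integral>w. gd m s w \<partial>lborel) = 1"
proof -
  obtain b0 :: 'e where b0: "b0 \<in> Basis" using nonempty_Basis by blast
  have h: "integrable lborel (\<lambda>y. normal_density (m \<bullet> b0) (s b0) y * 1)"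
    using nd_facts(1)[OF s[OF b0]] by simp
  have r1: "integrable lborel (\<lambda>w. gd m s w * 1)"
    by (rule gd_expect1(1)[where m=m and s=s and ba=b0 and h="\<lambda>_. 1", OF s b0 h])
  have r2: "(\<integral>w. gd m s w * 1 \<partial>lborel) = (\<integral>y. normal_density (m \<bullet> b0) (s b0) y * 1 \<partial>lborel)"
    by (rule gd_expect1(2)[where m=m and s=s and ba=b0 and h="\<lambda>_. 1", OF s b0 h])
  show "integrable lborel (gd m s)" using r1 by (simp only: mult_1_right)
  show "(\<integral>w. gd m s w \<partial>lborel) = 1" using r2 nd_facts(2)[OF s[OF b0]] by (simp only: mult_1_right)
qed

lemma gd_lin: assumes b: "b \<in> Basis"
  shows "integrable lborel (\<lambda>w. gd m s w * (w \<bullet> b - m \<bullet> b))"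
  "(\<integral>w. gd m s w * (w \<bullet> b - m \<bullet> b) \<partial>lborel) = 0"
proof -
  have h: "integrable lborel (\<lambda>y. normal_density (m \<bullet> b) (s b) y * (y - m \<bullet> b))"
    by (rule nd_facts(3)[OF s[OF b]])
  show "integrable lborel (\<lambda>w. gd m s w * (w \<bullet> b - m \<bullet> b))"
    by (rule gd_expect1(1)[where m=m and s=s and ba=b and h="\<lambda>y. y - m \<bullet> b", OF s b h])
  have "(\<integral>w. gd m s w * (w \<bullet> b - m \<bullet> b) \<partial>lborel) = (\<integral>y. normal_density (m \<bullet> b) (s b) y * (y - m \<bullet> b) \<partial>lborel)"
    by (rule gd_expect1(2)[where m=m and s=s and ba=b and h="\<lambda>y. y - m \<bullet> b", OF s b h])
  also have "\<dots> = 0" by (rule nd_facts(4)[OF s[OF b]])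
  finally show "(\<integral>w. gd m s w * (w \<bullet> b - m \<bullet> b) \<partial>lborel) = 0" .
qed

lemma gd_sq: assumes b: "b \<in> Basis"
  shows "integrable lborel (\<lambda>w. gd m s w * (w \<bullet> b - m \<bullet> b)\<^sup>2)"
  "(\<integral>w. gd m s w * (w \<bullet> b - m \<bullet> b)\<^sup>2 \<partial>lborel) = (s b)\<^sup>2"
proof -
  have h: "integrable lborel (\<lambda>y. normal_density (m \<bullet> b) (s b) y * (y - m \<bullet> b)\<^sup>2)"
    by (rule nd_facts(5)[OF s[OF b]])
  show "integrable lborel (\<lambda>w. gd m s w * (w \<bullet> b - m \<bullet> b)\<^sup>2)"
    by (rule gd_expect1(1)[where m=m and s=s and ba=b and h="\<lambda>y. (y - m \<bullet> b)\<^sup>2", OF s b h])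
  have "(\<integral>w. gd m s w * (w \<bullet> b - m \<bullet> b)\<^sup>2 \<partial>lborel) = (\<integral>y. normal_density (m \<bullet> b) (s b) y * (y - m \<bullet> b)\<^sup>2 \<partial>lborel)"
    by (rule gd_expect1(2)[where m=m and s=s and ba=b and h="\<lambda>y. (y - m \<bullet> b)\<^sup>2", OF s b h])
  also have "\<dots> = (s b)\<^sup>2" by (rule nd_facts(6)[OF s[OF b]])
  finally show "(\<integral>w. gd m s w * (w \<bullet> b - m \<bullet> b)\<^sup>2 \<partial>lborel) = (s b)\<^sup>2" .
qed

lemma gd_cross: assumes b: "b \<in> Basis" and c: "c \<in> Basis" and ne: "b \<noteq> c"
  shows "integrable lborel (\<lambda>w. gd m s w * ((w \<bullet> b - m \<bullet> b) * (w \<bullet> c - m \<bullet> c)))"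
  "(\<integral>w. gd m s w * ((w \<bullet> b - m \<bullet> b) * (w \<bullet> c - m \<bullet> c)) \<partial>lborel) = 0"
proof -
  have h1: "integrable lborel (\<lambda>y. normal_density (m \<bullet> b) (s b) y * (y - m \<bullet> b))"
    by (rule nd_facts(3)[OF s[OF b]])
  have h2: "integrable lborel (\<lambda>y. normal_density (m \<bullet> c) (s c) y * (y - m \<bullet> c))"
    by (rule nd_facts(3)[OF s[OF c]])
  show "integrable lborel (\<lambda>w. gd m s w * ((w \<bullet> b - m \<bullet> b) * (w \<bullet> c - m \<bullet> c)))"
    by (rule gd_expect2(1)[where m=m and s=s and ba=b and bb=c and ha="\<lambda>y. y - m \<bullet> b" and hb="\<lambda>y. y - m \<bullet> c", OF s b c ne h1 h2])
  have "(\<integral>w. gd m s w * ((w \<bullet> b - m \<bullet> b) * (w \<bullet> c - m \<bullet> c)) \<partial>lborel) =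
     (\<integral>y. normal_density (m \<bullet> b) (s b) y * (y - m \<bullet> b) \<partial>lborel) * (\<integral>y. normal_density (m \<bullet> c) (s c) y * (y - m \<bullet> c) \<partial>lborel)"
    by (rule gd_expect2(2)[where m=m and s=s and ba=b and bb=c and ha="\<lambda>y. y - m \<bullet> b" and hb="\<lambda>y. y - m \<bullet> c", OF s b c ne h1 h2])
  also have "\<dots> = 0" by (simp only: nd_facts(4)[OF s[OF b]] mult_zero_left)
  finally show "(\<integral>w. gd m s w * ((w \<bullet> b - m \<bullet> b) * (w \<bullet> c - m \<bullet> c)) \<partial>lborel) = 0" .
qed

lemma gd_prod2_int: assumes b: "b \<in> Basis" and c: "c \<in> Basis"
  shows "integrable lborel (\<lambda>w. gd m s w * ((w \<bullet> b - m \<bullet> b) * (w \<bullet> c - m \<bullet> c)))"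
  using gd_sq(1)[OF b] gd_cross(1)[OF b c] by (cases "b = c") (simp_all only: power2_eq_square, blast)

lemma gd_prod2_val: assumes b: "b \<in> Basis" and c: "c \<in> Basis"
  shows "(\<integral>w. gd m s w * ((w \<bullet> b - m \<bullet> b) * (w \<bullet> c - m \<bullet> c)) \<partial>lborel) = (if b = c then (s b)\<^sup>2 else 0)"
proof (cases "b = c")
  case True
  then show ?thesis using gd_sq(2)[OF b] by (simp add: power2_eq_square)
next
  case False
  then show ?thesis using gd_cross(2)[OF b c False] by simp
qed

lemma inner_expand: "(w - m) \<bullet> a = (\<Sum>b\<in>Basis. (a \<bullet> b) * (w \<bullet> b - m \<bullet> b))"
  by (subst euclidean_inner) (simp add: inner_diff_left algebra_simps)

lemma gd_lin_a: "integrable lborel (\<lambda>w. gd m s w * ((w - m) \<bullet> a))"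
  "(\<integral>w. gd m s w * ((w - m) \<bullet> a) \<partial>lborel) = 0"
proof -
  have eq: "(\<lambda>w. gd m s w * ((w - m) \<bullet> a)) = (\<lambda>w. \<Sum>b\<in>Basis. (a \<bullet> b) * (gd m s w * (w \<bullet> b - m \<bullet> b)))"
    by (rule ext, simp only: inner_expand sum_distrib_left, intro sum.cong refl, simp add: mult_ac)
  have ii: "integrable lborel (\<lambda>w. (a \<bullet> b) * (gd m s w * (w \<bullet> b - m \<bullet> b)))" if "b \<in> Basis" for b
    by (rule integrable_mult_right) (rule gd_lin(1)[OF that])
  show "integrable lborel (\<lambda>w. gd m s w * ((w - m) \<bullet> a))"
    unfolding eq by (rule Bochner_Integration.integrable_sum) (rule ii)
  have "(\<integral>w. gd m s w * ((w - m) \<bullet> a) \<partial>lborel) = (\<Sum>b\<in>Basis. \<integral>w. (a \<bullet> b) * (gd m s w * (w \<bullet> b - m \<bullet> b)) \<partial>lborel)"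
    unfolding eq by (rule Bochner_Integration.integral_sum) (rule ii)
  also have "\<dots> = 0"
    by (intro sum.neutral ballI) (simp add: gd_lin(2))
  finally show "(\<integral>w. gd m s w * ((w - m) \<bullet> a) \<partial>lborel) = 0" .
qed

lemma gd_quad: "integrable lborel (\<lambda>w. gd m s w * ((w - m) \<bullet> a)\<^sup>2)"
  "(\<integral>w. gd m s w * ((w - m) \<bullet> a)\<^sup>2 \<partial>lborel) = (\<Sum>b\<in>Basis. (a \<bullet> b)\<^sup>2 * (s b)\<^sup>2)"
proof -
  have eq: "(\<lambda>w. gd m s w * ((w - m) \<bullet> a)\<^sup>2) = (\<lambda>w. \<Sum>b\<in>Basis. \<Sum>c\<in>Basis. ((a \<bullet> b) * (a \<bullet> c)) *
      (gd m s w * ((w \<bullet> b - m \<bullet> b) * (w \<bullet> c - m \<bullet> c))))"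
    by (rule ext, simp only: inner_expand power2_eq_square sum_product, simp only: sum_distrib_left, intro sum.cong refl, simp add: mult_ac)
  have ii: "integrable lborel (\<lambda>w. ((a \<bullet> b) * (a \<bullet> c)) * (gd m s w * ((w \<bullet> b - m \<bullet> b) * (w \<bullet> c - m \<bullet> c))))"
    if "b \<in> Basis" "c \<in> Basis" for b c
    by (rule integrable_mult_right) (rule gd_prod2_int[OF that])
  have ii2: "\<And>b. b \<in> Basis \<Longrightarrow> integrable lborel (\<lambda>w. \<Sum>c\<in>Basis. ((a \<bullet> b) * (a \<bullet> c)) *
      (gd m s w * ((w \<bullet> b - m \<bullet> b) * (w \<bullet> c - m \<bullet> c))))"
    by (rule Bochner_Integration.integrable_sum) (rule ii)
  show "integrable lborel (\<lambda>w. gd m s w * ((w - m) \<bullet> a)\<^sup>2)"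
    unfolding eq by (rule Bochner_Integration.integrable_sum) (rule ii2)
  have "(\<integral>w. gd m s w * ((w - m) \<bullet> a)\<^sup>2 \<partial>lborel) =
      (\<Sum>b\<in>Basis. \<integral>w. (\<Sum>c\<in>Basis. ((a \<bullet> b) * (a \<bullet> c)) *
      (gd m s w * ((w \<bullet> b - m \<bullet> b) * (w \<bullet> c - m \<bullet> c)))) \<partial>lborel)"
    unfolding eq by (rule Bochner_Integration.integral_sum) (rule ii2)
  also have "\<dots> = (\<Sum>b\<in>Basis. \<Sum>c\<in>Basis. ((a \<bullet> b) * (a \<bullet> c)) * (if b = c then (s b)\<^sup>2 else 0))"
  proof (intro sum.cong refl)
    fix b :: 'e assume b: "b \<in> Basis"
    have "(\<integral>w. (\<Sum>c\<in>Basis. ((a \<bullet> b) * (a \<bullet> c)) * (gd m s w * ((w \<bullet> b - m \<bullet> b) * (w \<bullet> c - m \<bullet> c)))) \<partial>lborel)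
       = (\<Sum>c\<in>Basis. \<integral>w. ((a \<bullet> b) * (a \<bullet> c)) * (gd m s w * ((w \<bullet> b - m \<bullet> b) * (w \<bullet> c - m \<bullet> c))) \<partial>lborel)"
      by (rule Bochner_Integration.integral_sum) (rule ii[OF b])
    also have "\<dots> = (\<Sum>c\<in>Basis. ((a \<bullet> b) * (a \<bullet> c)) * (if b = c then (s b)\<^sup>2 else 0))"
      by (intro sum.cong refl) (simp add: gd_prod2_val[OF b])
    finally show "(\<integral>w. (\<Sum>c\<in>Basis. ((a \<bullet> b) * (a \<bullet> c)) * (gd m s w * ((w \<bullet> b - m \<bullet> b) * (w \<bullet> c - m \<bullet> c)))) \<partial>lborel)
       = (\<Sum>c\<in>Basis. ((a \<bullet> b) * (a \<bullet> c)) * (if b = c then (s b)\<^sup>2 else 0))" .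
  qed
  also have "\<dots> = (\<Sum>b\<in>Basis. (a \<bullet> b)\<^sup>2 * (s b)\<^sup>2)"
    by (intro sum.cong refl) (simp add: if_distrib sum.delta' power2_eq_square cong: if_cong)
  finally show "(\<integral>w. gd m s w * ((w - m) \<bullet> a)\<^sup>2 \<partial>lborel) = (\<Sum>b\<in>Basis. (a \<bullet> b)\<^sup>2 * (s b)\<^sup>2)" .
qed

lemma gd_quad0: "integrable lborel (\<lambda>w. gd m s w * (w \<bullet> a)\<^sup>2)"
  "(\<integral>w. gd m s w * (w \<bullet> a)\<^sup>2 \<partial>lborel) = (m \<bullet> a)\<^sup>2 + (\<Sum>b\<in>Basis. (a \<bullet> b)\<^sup>2 * (s b)\<^sup>2)"
proof -
  have eq: "(\<lambda>w. gd m s w * (w \<bullet> a)\<^sup>2) = (\<lambda>w. gd m s w * ((w - m) \<bullet> a)\<^sup>2 +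
       (2 * (m \<bullet> a)) * (gd m s w * ((w - m) \<bullet> a)) + (m \<bullet> a)\<^sup>2 * gd m s w)"
    by (rule ext) (simp add: inner_diff_left power2_eq_square algebra_simps)
  have i1: "integrable lborel (\<lambda>w. (2 * (m \<bullet> a)) * (gd m s w * ((w - m) \<bullet> a)))"
    by (rule integrable_mult_right) (rule gd_lin_a(1))
  have i2: "integrable lborel (\<lambda>w. (m \<bullet> a)\<^sup>2 * gd m s w)"
    by (rule integrable_mult_right) (rule gd_one(1))
  show "integrable lborel (\<lambda>w. gd m s w * (w \<bullet> a)\<^sup>2)"
    unfolding eq by (rule Bochner_Integration.integrable_add[OF Bochner_Integration.integrable_add[OF gd_quad(1) i1] i2])
  have "(\<integral>w. gd m s w * (w \<bullet> a)\<^sup>2 \<partial>lborel) = (\<integral>w. gd m s w * ((w - m) \<bullet> a)\<^sup>2 +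
       (2 * (m \<bullet> a)) * (gd m s w * ((w - m) \<bullet> a)) \<partial>lborel) + (\<integral>w. (m \<bullet> a)\<^sup>2 * gd m s w \<partial>lborel)"
    unfolding eq by (rule Bochner_Integration.integral_add[OF Bochner_Integration.integrable_add[OF gd_quad(1) i1] i2])
  also have "(\<integral>w. gd m s w * ((w - m) \<bullet> a)\<^sup>2 +
       (2 * (m \<bullet> a)) * (gd m s w * ((w - m) \<bullet> a)) \<partial>lborel) = (\<integral>w. gd m s w * ((w - m) \<bullet> a)\<^sup>2 \<partial>lborel) +
       (\<integral>w. (2 * (m \<bullet> a)) * (gd m s w * ((w - m) \<bullet> a)) \<partial>lborel)"
    by (rule Bochner_Integration.integral_add[OF gd_quad(1) i1])
  also have "(\<integral>w. (2 * (m \<bullet> a)) * (gd m s w * ((w - m) \<bullet> a)) \<partial>lborel) = 0"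
    by (simp only: integral_mult_right_zero gd_lin_a(2) mult_zero_right)
  also have "(\<integral>w. (m \<bullet> a)\<^sup>2 * gd m s w \<partial>lborel) = (m \<bullet> a)\<^sup>2"
    by (simp only: integral_mult_right_zero gd_one(2) mult_1_right)
  finally show "(\<integral>w. gd m s w * (w \<bullet> a)\<^sup>2 \<partial>lborel) = (m \<bullet> a)\<^sup>2 + (\<Sum>b\<in>Basis. (a \<bullet> b)\<^sup>2 * (s b)\<^sup>2)"
    by (simp only: gd_quad(2) add_0_right add.commute)
qed

end

lemma ln_nd: "0 < \<sigma> \<Longrightarrow> ln (normal_density \<mu> \<sigma> x) = - ln (sqrt (2 * pi * \<sigma>\<^sup>2)) - (x - \<mu>)\<^sup>2 / (2 * \<sigma>\<^sup>2)"
  unfolding normal_density_def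
  by (subst ln_mult) (auto simp: ln_div)

lemma ln_gd: assumes "\<And>b. b \<in> Basis \<Longrightarrow> 0 < s b"
  shows "ln (gd m s w) = (\<Sum>b\<in>Basis. - ln (sqrt (2 * pi * (s b)\<^sup>2)) - (w \<bullet> b - m \<bullet> b)\<^sup>2 / (2 * (s b)\<^sup>2))"
  unfolding gd_def using assms
  by (subst ln_prod) (auto intro!: sum.cong simp: ln_nd normal_density_pos[THEN less_imp_neq, symmetric])

lemma ln_sqrt_ratio: "0 < r \<Longrightarrow> 0 < s \<Longrightarrow> ln (sqrt (2 * pi * r\<^sup>2)) - ln (sqrt (2 * pi * s\<^sup>2)) = ln (r / s)"
  by (simp add: real_sqrt_mult ln_mult ln_div)

lemma gd_kl:
  fixes m :: "'e::euclidean_space"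
  assumes s: "\<And>b. b \<in> Basis \<Longrightarrow> 0 < s b" and r: "\<And>b. b \<in> Basis \<Longrightarrow> 0 < r b"
  shows "integrable lborel (\<lambda>w. gd m s w * (ln (gd m s w) - ln (gd 0 r w)))"
    "(\<integral>w. gd m s w * (ln (gd m s w) - ln (gd 0 r w)) \<partial>lborel) =
      (\<Sum>b\<in>Basis. ln (r b / s b) + ((s b)\<^sup>2 + (m \<bullet> b)\<^sup>2) / (2 * (r b)\<^sup>2) - 1 / 2)"
proof -
  define c where "c b = ln (r b / s b) + (m \<bullet> b)\<^sup>2 / (2 * (r b)\<^sup>2)" for b
  define \<alpha> where "\<alpha> b = 1 / (2 * (r b)\<^sup>2) - 1 / (2 * (s b)\<^sup>2)" for b
  define \<beta> where "\<beta> b = (m \<bullet> b) / (r b)\<^sup>2" for b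
  define F where "F b w = c b * gd m s w + \<alpha> b * (gd m s w * (w \<bullet> b - m \<bullet> b)\<^sup>2) + \<beta> b * (gd m s w * (w \<bullet> b - m \<bullet> b))" for b w
  have pt: "gd m s w * (ln (gd m s w) - ln (gd 0 r w)) = (\<Sum>b\<in>Basis. F b w)" for w
  proof -
    have "ln (gd m s w) - ln (gd 0 r w) = (\<Sum>b\<in>Basis. (- ln (sqrt (2 * pi * (s b)\<^sup>2)) - (w \<bullet> b - m \<bullet> b)\<^sup>2 / (2 * (s b)\<^sup>2))
        - (- ln (sqrt (2 * pi * (r b)\<^sup>2)) - (w \<bullet> b - 0 \<bullet> b)\<^sup>2 / (2 * (r b)\<^sup>2)))"
      by (simp only: ln_gd[OF s] ln_gd[OF r] sum_subtractf)
    also have "\<dots> = (\<Sum>b\<in>Basis. c b + \<alpha> b * (w \<bullet> b - m \<bullet> b)\<^sup>2 + \<beta> b * (w \<bullet> b - m \<bullet> b))"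
    proof (intro sum.cong refl)
      fix b :: 'e assume b: "b \<in> Basis"
      have rs: "ln (sqrt (2 * pi * (r b)\<^sup>2)) - ln (sqrt (2 * pi * (s b)\<^sup>2)) = ln (r b / s b)"
        by (rule ln_sqrt_ratio[OF r[OF b] s[OF b]])
      have "(w \<bullet> b)\<^sup>2 = (w \<bullet> b - m \<bullet> b)\<^sup>2 + 2 * (m \<bullet> b) * (w \<bullet> b - m \<bullet> b) + (m \<bullet> b)\<^sup>2"
        by (simp add: power2_eq_square algebra_simps)
      then show "- ln (sqrt (2 * pi * (s b)\<^sup>2)) - (w \<bullet> b - m \<bullet> b)\<^sup>2 / (2 * (s b)\<^sup>2)
        - (- ln (sqrt (2 * pi * (r b)\<^sup>2)) - (w \<bullet> b - 0 \<bullet> b)\<^sup>2 / (2 * (r b)\<^sup>2)) =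
        c b + \<alpha> b * (w \<bullet> b - m \<bullet> b)\<^sup>2 + \<beta> b * (w \<bullet> b - m \<bullet> b)"
        using rs r[OF b] s[OF b] unfolding c_def \<alpha>_def \<beta>_def
        by (simp add: field_simps power2_eq_square)
    qed
    finally show ?thesis
      by (simp add: F_def sum_distrib_left algebra_simps)
  qed
  have iF: "integrable lborel (F b)" if b: "b \<in> Basis" for b
    unfolding F_def
    by (intro Bochner_Integration.integrable_add integrable_mult_right gd_one(1)[OF s] gd_sq(1)[OF s b] gd_lin(1)[OF s b])
  have vF: "(\<integral>w. F b w \<partial>lborel) = ln (r b / s b) + ((s b)\<^sup>2 + (m \<bullet> b)\<^sup>2) / (2 * (r b)\<^sup>2) - 1 / 2"
    if b: "b \<in> Basis" for b
  proof -
    have i1: "integrable lborel (\<lambda>w. c b * gd m s w)" by (rule integrable_mult_right) (rule gd_one(1)[OF s])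
    have i2: "integrable lborel (\<lambda>w. \<alpha> b * (gd m s w * (w \<bullet> b - m \<bullet> b)\<^sup>2))" by (rule integrable_mult_right) (rule gd_sq(1)[OF s b])
    have i3: "integrable lborel (\<lambda>w. \<beta> b * (gd m s w * (w \<bullet> b - m \<bullet> b)))" by (rule integrable_mult_right) (rule gd_lin(1)[OF s b])
    have "(\<integral>w. F b w \<partial>lborel) = (\<integral>w. c b * gd m s w \<partial>lborel) + (\<integral>w. \<alpha> b * (gd m s w * (w \<bullet> b - m \<bullet> b)\<^sup>2) \<partial>lborel)
        + (\<integral>w. \<beta> b * (gd m s w * (w \<bullet> b - m \<bullet> b)) \<partial>lborel)"
      unfolding F_def
      by (simp only: Bochner_Integration.integral_add[OF Bochner_Integration.integrable_add[OF i1 i2] i3]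
          Bochner_Integration.integral_add[OF i1 i2])
    also have "\<dots> = c b + \<alpha> b * (s b)\<^sup>2"
      by (simp only: integral_mult_right_zero gd_one(2)[OF s] gd_sq(2)[OF s b] gd_lin(2)[OF s b] mult_1_right mult_zero_right add_0_right)
    also have "\<dots> = ln (r b / s b) + ((s b)\<^sup>2 + (m \<bullet> b)\<^sup>2) / (2 * (r b)\<^sup>2) - 1 / 2"
      using s[OF b] r[OF b] unfolding c_def \<alpha>_def by (simp add: field_simps power2_eq_square)
    finally show ?thesis .
  qed
  show "integrable lborel (\<lambda>w. gd m s w * (ln (gd m s w) - ln (gd 0 r w)))"
    unfolding pt by (rule Bochner_Integration.integrable_sum) (rule iF)
  show "(\<integral>w. gd m s w * (ln (gd m s w) - ln (gd 0 r w)) \<partial>lborel) =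
      (\<Sum>b\<in>Basis. ln (r b / s b) + ((s b)\<^sup>2 + (m \<bullet> b)\<^sup>2) / (2 * (r b)\<^sup>2) - 1 / 2)"
    unfolding pt by (subst Bochner_Integration.integral_sum[OF iF]) (auto intro!: sum.cong vF)
qed

lemma Basis_mat_eq: "(Basis :: (real^'b^'a) set) = (\<lambda>(i,j). axis i (axis j 1)) ` UNIV"
  by (auto simp: Basis_vec_def)

lemma inj_Basis_mat: "inj (\<lambda>(i,j). (axis i (axis j 1) :: real^'b^'a))"
  by (auto simp: inj_def axis_eq_axis)

lemma sum_Basis_mat: "(\<Sum>b\<in>(Basis :: (real^'b^'a) set). f b) = (\<Sum>i\<in>UNIV. \<Sum>j\<in>UNIV. f (axis i (axis j 1)))"
  unfolding Basis_mat_eq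
  by (subst sum.reindex[OF inj_Basis_mat]) (simp add: sum.cartesian_product case_prod_beta' flip: UNIV_Times_UNIV)

lemma prod_Basis_mat: "(\<Prod>b\<in>(Basis :: (real^'b^'a) set). f b) = (\<Prod>i\<in>UNIV. \<Prod>j\<in>UNIV. f (axis i (axis j 1)))"
  unfolding Basis_mat_eq
  by (subst prod.reindex[OF inj_Basis_mat]) (simp add: prod.cartesian_product case_prod_beta' flip: UNIV_Times_UNIV)

lemma inner_mat_axis: "(A :: real^'b^'a) \<bullet> axis i (axis j 1) = A $ i $ j"
  by (simp add: inner_axis)

lemma gmd_eq_gd: "gauss_mat_density \<rho> (A :: real^'b^'a) = gd 0 (\<lambda>_. \<rho>) A"
  unfolding gauss_mat_density_def gd_def prod_Basis_mat by (simp add: inner_mat_axis)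

lemma Basis_prod_disj: "(\<lambda>u. (u, 0::'b::euclidean_space)) ` (Basis::'a::euclidean_space set) \<inter> (\<lambda>v. (0::'a, v)) ` (Basis::'b set) = {}"
  by (auto dest: nonzero_Basis)

lemma sum_Basis_prod: "(\<Sum>b\<in>(Basis :: ('a::euclidean_space \<times> 'b::euclidean_space) set). f b) =
    (\<Sum>u\<in>Basis. f (u, 0)) + (\<Sum>v\<in>Basis. f (0, v))"
  unfolding Basis_prod_def
  by (subst sum.union_disjoint) (auto simp: Basis_prod_disj sum.reindex inj_on_def)

lemma prod_Basis_prod: "(\<Prod>b\<in>(Basis :: ('a::euclidean_space \<times> 'b::euclidean_space) set). f b) =
    (\<Prod>u\<in>Basis. f (u, 0)) * (\<Prod>v\<in>Basis. f (0, v))"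
  unfolding Basis_prod_def
  by (subst prod.union_disjoint) (auto simp: Basis_prod_disj prod.reindex inj_on_def)

lemma gd_pair: "gd (m :: 'a::euclidean_space \<times> 'b::euclidean_space) s w =
    gd (fst m) (\<lambda>u. s (u, 0)) (fst w) * gd (snd m) (\<lambda>v. s (0, v)) (snd w)"
  unfolding gd_def prod_Basis_prod by (simp add: inner_Pair_0)

lemma gd_cong: "(\<And>b. b \<in> Basis \<Longrightarrow> s b = s' b) \<Longrightarrow> gd m s = gd m s'"
  unfolding gd_def by (intro ext prod.cong) auto

definition rr :: "real \<Rightarrow> real \<Rightarrow> ('a::euclidean_space \<times> 'b::euclidean_space) \<Rightarrow> real" where
  "rr r1 r2 b = (if snd b = 0 then r1 else r2)"

lemma rr_pos: "0 < r1 \<Longrightarrow> 0 < r2 \<Longrightarrow> 0 < rr r1 r2 b"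
  by (simp add: rr_def)

lemma gd_pair_rr: "gd m (\<lambda>b. c * rr r1 r2 b) (w :: 'a::euclidean_space \<times> 'b::euclidean_space) =
    gd (fst m) (\<lambda>_. c * r1) (fst w) * gd (snd m) (\<lambda>_. c * r2) (snd w)"
proof -
  have "gd (snd m) (\<lambda>v. c * rr r1 r2 (0::'a, v)) = gd (snd m) (\<lambda>_. c * r2)"
    by (rule gd_cong) (auto simp: rr_def dest: nonzero_Basis)
  then show ?thesis by (simp add: gd_pair rr_def)
qed

lemma gauss_prior_gd: "gauss_prior \<rho>1 \<rho>2 = density lborel (\<lambda>w. ennreal (gd 0 (\<lambda>b. 1 * rr \<rho>1 \<rho>2 b) w))"
  unfolding gauss_prior_def gd_pair_rr gmd_eq_gd by simp

lemma sum_Basis_sq: "(\<Sum>b\<in>Basis. (x \<bullet> b)\<^sup>2) = (norm x)\<^sup>2"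
  unfolding power2_norm_eq_inner euclidean_inner[of x x] by (simp add: power2_eq_square)

definition colv :: "real^'r \<Rightarrow> 'c \<Rightarrow> real^'c^'r" where
  "colv v j = (\<chi> i k. if k = j then v $ i else 0)"

lemma norm_sq_vec_gen: "(norm (x :: ('a::real_inner)^'n))\<^sup>2 = (\<Sum>j\<in>UNIV. (norm (x $ j))\<^sup>2)"
  unfolding power2_norm_eq_inner inner_vec_def ..

lemma norm_sq_vec: "(norm (x :: real^'n))\<^sup>2 = (\<Sum>j\<in>UNIV. (x $ j)\<^sup>2)"
  unfolding norm_sq_vec_gen by simp

lemma tmv_comp: "(transpose A *v v) $ j = A \<bullet> colv v j"
  by (simp add: transpose_def matrix_vector_mult_def inner_vec_def colv_def if_distrib cong: if_cong)

lemma norm_colv: "(norm (colv v j))\<^sup>2 = (norm v)\<^sup>2"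
proof -
  have "(norm (colv v j))\<^sup>2 = (\<Sum>i\<in>UNIV. (norm (colv v j $ i))\<^sup>2)" by (rule norm_sq_vec_gen)
  also have "\<dots> = (\<Sum>i\<in>UNIV. (v $ i)\<^sup>2)"
  proof (intro sum.cong refl)
    fix i
    have "(\<Sum>k\<in>UNIV. ((colv v j $ i) $ k)\<^sup>2) = (\<Sum>k\<in>UNIV. if k = j then (v $ i)\<^sup>2 else 0)"
      by (intro sum.cong refl) (simp add: colv_def)
    then show "(norm (colv v j $ i))\<^sup>2 = (v $ i)\<^sup>2" by (simp add: norm_sq_vec)
  qed
  also have "\<dots> = (norm v)\<^sup>2" by (simp add: norm_sq_vec)
  finally show ?thesis .
qed

lemma norm_tmv_sq: "(norm (transpose A *v v))\<^sup>2 = (\<Sum>j\<in>UNIV. (A \<bullet> colv v j)\<^sup>2)"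
  unfolding norm_sq_vec tmv_comp ..

lemma sum_Basis_sq_const: "(\<Sum>b\<in>Basis. (a \<bullet> b)\<^sup>2 * s\<^sup>2) = s\<^sup>2 * (norm a)\<^sup>2"
  unfolding sum_distrib_right[symmetric] sum_Basis_sq by (rule mult.commute)

lemma block_quad:
  fixes m :: "real^'c^'r" and v :: "real^'r"
  assumes s: "0 < s"
  shows "integrable lborel (\<lambda>A. gd m (\<lambda>_. s) A * (norm (transpose (A - m) *v v))\<^sup>2)"
    "(\<integral>A. gd m (\<lambda>_. s) A * (norm (transpose (A - m) *v v))\<^sup>2 \<partial>lborel) = real CARD('c) * s\<^sup>2 * (norm v)\<^sup>2"
proof -
  have s': "\<And>b. b \<in> (Basis :: (real^'c^'r) set) \<Longrightarrow> 0 < (\<lambda>_. s) b" using s by simp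
  have eq: "(\<lambda>A. gd m (\<lambda>_. s) A * (norm (transpose (A - m) *v v))\<^sup>2) =
      (\<lambda>A. \<Sum>j\<in>UNIV. gd m (\<lambda>_. s) A * ((A - m) \<bullet> colv v j)\<^sup>2)"
    unfolding norm_tmv_sq sum_distrib_left ..
  have ii: "integrable lborel (\<lambda>A. gd m (\<lambda>_. s) A * ((A - m) \<bullet> colv v j)\<^sup>2)" for j
    by (rule gd_quad(1)[OF s'])
  show "integrable lborel (\<lambda>A. gd m (\<lambda>_. s) A * (norm (transpose (A - m) *v v))\<^sup>2)"
    unfolding eq by (rule Bochner_Integration.integrable_sum) (rule ii)
  have "(\<integral>A. gd m (\<lambda>_. s) A * (norm (transpose (A - m) *v v))\<^sup>2 \<partial>lborel) =
      (\<Sum>j\<in>UNIV. \<integral>A. gd m (\<lambda>_. s) A * ((A - m) \<bullet> colv v j)\<^sup>2 \<partial>lborel)"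
    unfolding eq by (rule Bochner_Integration.integral_sum) (rule ii)
  also have "\<dots> = (\<Sum>j\<in>(UNIV::'c set). s\<^sup>2 * (norm v)\<^sup>2)"
    by (intro sum.cong refl) (simp only: gd_quad(2)[OF s'] sum_Basis_sq_const norm_colv)
  also have "\<dots> = real CARD('c) * s\<^sup>2 * (norm v)\<^sup>2" by simp
  finally show "(\<integral>A. gd m (\<lambda>_. s) A * (norm (transpose (A - m) *v v))\<^sup>2 \<partial>lborel) = real CARD('c) * s\<^sup>2 * (norm v)\<^sup>2" .
qed

lemma block_quad0:
  fixes m :: "real^'c^'r" and v :: "real^'r"
  assumes s: "0 < s"
  shows "integrable lborel (\<lambda>A. gd m (\<lambda>_. s) A * (norm (transpose A *v v))\<^sup>2)"
    "(\<integral>A. gd m (\<lambda>_. s) A * (norm (transpose A *v v))\<^sup>2 \<partial>lborel) =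
       (norm (transpose m *v v))\<^sup>2 + real CARD('c) * s\<^sup>2 * (norm v)\<^sup>2"
proof -
  have s': "\<And>b. b \<in> (Basis :: (real^'c^'r) set) \<Longrightarrow> 0 < (\<lambda>_. s) b" using s by simp
  have eq: "(\<lambda>A. gd m (\<lambda>_. s) A * (norm (transpose A *v v))\<^sup>2) =
      (\<lambda>A. \<Sum>j\<in>UNIV. gd m (\<lambda>_. s) A * (A \<bullet> colv v j)\<^sup>2)"
    unfolding norm_tmv_sq sum_distrib_left ..
  have ii: "integrable lborel (\<lambda>A. gd m (\<lambda>_. s) A * (A \<bullet> colv v j)\<^sup>2)" for j
    by (rule gd_quad0(1)[OF s'])
  show "integrable lborel (\<lambda>A. gd m (\<lambda>_. s) A * (norm (transpose A *v v))\<^sup>2)"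
    unfolding eq by (rule Bochner_Integration.integrable_sum) (rule ii)
  have "(\<integral>A. gd m (\<lambda>_. s) A * (norm (transpose A *v v))\<^sup>2 \<partial>lborel) =
      (\<Sum>j\<in>UNIV. \<integral>A. gd m (\<lambda>_. s) A * (A \<bullet> colv v j)\<^sup>2 \<partial>lborel)"
    unfolding eq by (rule Bochner_Integration.integral_sum) (rule ii)
  also have "\<dots> = (\<Sum>j\<in>(UNIV::'c set). (m \<bullet> colv v j)\<^sup>2 + s\<^sup>2 * (norm v)\<^sup>2)"
    by (intro sum.cong refl) (simp only: gd_quad0(2)[OF s'] sum_Basis_sq_const norm_colv)
  also have "\<dots> = (norm (transpose m *v v))\<^sup>2 + real CARD('c) * s\<^sup>2 * (norm v)\<^sup>2"
    unfolding sum.distrib norm_tmv_sq by simp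
  finally show "(\<integral>A. gd m (\<lambda>_. s) A * (norm (transpose A *v v))\<^sup>2 \<partial>lborel) =
       (norm (transpose m *v v))\<^sup>2 + real CARD('c) * s\<^sup>2 * (norm v)\<^sup>2" .
qed

lemma lip_cont: assumes lip: "\<forall>u v. \<bar>\<sigma> u - \<sigma> v\<bar> \<le> \<bar>u - v\<bar>" shows "continuous_on UNIV (\<sigma> :: real \<Rightarrow> real)"
  unfolding continuous_on_iff
proof (intro ballI allI impI)
  fix x e :: real assume "0 < e"
  show "\<exists>d>0. \<forall>x'\<in>UNIV. dist x' x < d \<longrightarrow> dist (\<sigma> x') (\<sigma> x) < e"
    using lip \<open>0 < e\<close> by (intro exI[of _ e]) (auto simp: dist_real_def intro: le_less_trans)
qed

lemma cont_comp_sig: "continuous_on UNIV (\<sigma> :: real \<Rightarrow> real) \<Longrightarrow> continuous_on S f \<Longrightarrow> continuous_on S (\<lambda>x. \<sigma> (f x))"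
  by (rule continuous_on_compose2[of UNIV \<sigma> S f]) auto

lemma fnet_comp: "fnet \<sigma> w x = (\<chi> k. \<Sum>j\<in>UNIV. snd w $ j $ k * \<sigma> (\<Sum>i\<in>UNIV. fst w $ i $ j * x $ i))"
  unfolding fnet_def sigbar_def
  by (simp add: vec_eq_iff matrix_vector_mult_def transpose_def)

lemma fnet_cont: assumes c: "continuous_on UNIV \<sigma>" and cf: "continuous_on S f" and cg: "continuous_on S g"
  shows "continuous_on S (\<lambda>z. fnet \<sigma> (f z) (g z))"
  unfolding fnet_comp
  by (intro continuous_intros cont_comp_sig[OF c] cf cg)

lemma transpose_diff: "transpose (A - B) = transpose A - (transpose B :: 'a::ring_1^'n^'m)"
  by (simp add: vec_eq_iff transpose_def)

lemma tmv_diff: "transpose A *v v - transpose B *v v = transpose (A - B) *v (v :: 'a::ring_1^'n)"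
  by (simp only: transpose_diff matrix_vector_mult_diff_rdistrib)

lemma abel3: "(a::'a::ab_group_add) - c = (a - b) + (b - c)" by simp

lemma inner_colv: "A \<bullet> colv v j = (\<chi> i. A $ i $ j) \<bullet> v"
  by (simp add: inner_vec_def colv_def if_distrib cong: if_cong)

lemma norm_tmv_le: "norm (transpose (A :: real^'c^'r) *v v) \<le> norm A * norm v"
proof -
  have "(norm (transpose A *v v))\<^sup>2 = (\<Sum>j\<in>UNIV. (A \<bullet> colv v j)\<^sup>2)" by (rule norm_tmv_sq)
  also have "\<dots> \<le> (\<Sum>j\<in>UNIV. (norm (\<chi> i. A $ i $ j))\<^sup>2 * (norm v)\<^sup>2)"
  proof (intro sum_mono)
    fix j
    have "\<bar>A \<bullet> colv v j\<bar> \<le> norm (\<chi> i. A $ i $ j) * norm v"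
      unfolding inner_colv by (rule Cauchy_Schwarz_ineq2)
    then have "\<bar>A \<bullet> colv v j\<bar>\<^sup>2 \<le> (norm (\<chi> i. A $ i $ j) * norm v)\<^sup>2"
      by (intro power_mono) auto
    then show "(A \<bullet> colv v j)\<^sup>2 \<le> (norm (\<chi> i. A $ i $ j))\<^sup>2 * (norm v)\<^sup>2"
      by (simp add: power_mult_distrib)
  qed
  also have "\<dots> = (\<Sum>j\<in>UNIV. \<Sum>i\<in>UNIV. (A $ i $ j)\<^sup>2) * (norm v)\<^sup>2"
    by (simp add: sum_distrib_right norm_sq_vec)
  also have "(\<Sum>j\<in>UNIV. \<Sum>i\<in>UNIV. (A $ i $ j)\<^sup>2) = (norm A)\<^sup>2"
    by (subst sum.swap) (simp add: norm_sq_vec_gen norm_sq_vec)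
  finally have "(norm (transpose A *v v))\<^sup>2 \<le> (norm A * norm v)\<^sup>2"
    by (simp add: power_mult_distrib)
  then show ?thesis
    by (rule power2_le_imp_le) simp
qed

lemma sigbar_lip: assumes lip: "\<forall>u v. \<bar>\<sigma> u - \<sigma> v\<bar> \<le> \<bar>u - v\<bar>"
  shows "(norm (sigbar \<sigma> a - sigbar \<sigma> (b :: real^'k)))\<^sup>2 \<le> (norm (a - b))\<^sup>2"
proof -
  have "(norm (sigbar \<sigma> a - sigbar \<sigma> b))\<^sup>2 = (\<Sum>j\<in>UNIV. (\<sigma> (a $ j) - \<sigma> (b $ j))\<^sup>2)"
    by (simp add: norm_sq_vec sigbar_def)
  also have "\<dots> \<le> (\<Sum>j\<in>UNIV. (a $ j - b $ j)\<^sup>2)"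
  proof (intro sum_mono)
    fix j
    have "\<bar>\<sigma> (a $ j) - \<sigma> (b $ j)\<bar> \<le> \<bar>a $ j - b $ j\<bar>" using lip by blast
    then have "\<bar>\<sigma> (a $ j) - \<sigma> (b $ j)\<bar>\<^sup>2 \<le> \<bar>a $ j - b $ j\<bar>\<^sup>2" by (intro power_mono) auto
    then show "(\<sigma> (a $ j) - \<sigma> (b $ j))\<^sup>2 \<le> (a $ j - b $ j)\<^sup>2" by simp
  qed
  also have "\<dots> = (norm (a - b))\<^sup>2" by (simp add: norm_sq_vec)
  finally show ?thesis .
qed

lemma sigbar_bounded: assumes M: "\<forall>u. \<bar>\<sigma> u\<bar> \<le> M"
  shows "(norm (sigbar \<sigma> (z :: real^'k)))\<^sup>2 \<le> real CARD('k) * M\<^sup>2"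
proof -
  have "(norm (sigbar \<sigma> z))\<^sup>2 = (\<Sum>j\<in>UNIV. (\<sigma> (z $ j))\<^sup>2)"
    by (simp add: norm_sq_vec sigbar_def)
  also have "\<dots> \<le> (\<Sum>j\<in>(UNIV::'k set). M\<^sup>2)"
  proof (intro sum_mono)
    fix j
    have "\<bar>\<sigma> (z $ j)\<bar>\<^sup>2 \<le> M\<^sup>2" using M by (intro power_mono) auto
    then show "(\<sigma> (z $ j))\<^sup>2 \<le> M\<^sup>2" by simp
  qed
  also have "\<dots> = real CARD('k) * M\<^sup>2" by simp
  finally show ?thesis .
qed

lemma sigbar_zero: assumes lip: "\<forall>u v. \<bar>\<sigma> u - \<sigma> v\<bar> \<le> \<bar>u - v\<bar>" and z: "\<sigma> 0 = 0"
  shows "(norm (sigbar \<sigma> (a :: real^'k)))\<^sup>2 \<le> (norm a)\<^sup>2"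
proof -
  have "sigbar \<sigma> (0 :: real^'k) = 0" by (simp add: sigbar_def z vec_eq_iff)
  then show ?thesis using sigbar_lip[OF lip, of a 0] by simp
qed

lemma sq_sum_le: "(norm (a + b :: 'a::real_normed_vector))\<^sup>2 \<le> 2 * (norm a)\<^sup>2 + 2 * (norm b)\<^sup>2"
proof -
  have "norm (a + b) \<le> norm a + norm b" by (rule norm_triangle_ineq)
  then have "(norm (a + b))\<^sup>2 \<le> (norm a + norm b)\<^sup>2" by (intro power_mono) auto
  also have "\<dots> \<le> 2 * (norm a)\<^sup>2 + 2 * (norm b)\<^sup>2"
    using sum_squares_bound[of "norm a" "norm b"] by (simp add: power2_eq_square algebra_simps)
  finally show ?thesis .
qed

lemma fnet_diff_bound:
  assumes lip: "\<forall>u v. \<bar>\<sigma> u - \<sigma> v\<bar> \<le> \<bar>u - v\<bar>"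
  shows "(norm (fnet \<sigma> w x - fnet \<sigma> m x))\<^sup>2 \<le>
     2 * (norm (transpose (snd w - snd m) *v sigbar \<sigma> (transpose (fst w) *v x)))\<^sup>2 +
     2 * ((norm (snd m))\<^sup>2 * (norm (transpose (fst w - fst m) *v x))\<^sup>2)"
proof -
  define u where "u = sigbar \<sigma> (transpose (fst w) *v x)"
  define u0 where "u0 = sigbar \<sigma> (transpose (fst m) *v x)"
  have eq: "fnet \<sigma> w x - fnet \<sigma> m x = transpose (snd w - snd m) *v u + transpose (snd m) *v (u - u0)"
    unfolding fnet_def u_def[symmetric] u0_def[symmetric]
    by (subst abel3[of _ _ "transpose (snd m) *v u"])
       (simp only: tmv_diff matrix_vector_mult_diff_distrib)
  have "(norm (transpose (snd m) *v (u - u0)))\<^sup>2 \<le> (norm (snd m) * norm (u - u0))\<^sup>2"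
    by (intro power_mono norm_tmv_le) auto
  also have "\<dots> = (norm (snd m))\<^sup>2 * (norm (u - u0))\<^sup>2" by (simp add: power_mult_distrib)
  also have "\<dots> \<le> (norm (snd m))\<^sup>2 * (norm (transpose (fst w) *v x - transpose (fst m) *v x))\<^sup>2"
    unfolding u_def u0_def by (intro mult_left_mono sigbar_lip[OF lip]) auto
  also have "transpose (fst w) *v x - transpose (fst m) *v x = transpose (fst w - fst m) *v x"
    by (rule tmv_diff)
  finally have b2: "(norm (transpose (snd m) *v (u - u0)))\<^sup>2 \<le> (norm (snd m))\<^sup>2 * (norm (transpose (fst w - fst m) *v x))\<^sup>2" .
  show ?thesis
    unfolding eq using sq_sum_le[of "transpose (snd w - snd m) *v u" "transpose (snd m) *v (u - u0)"] b2
    by (simp add: u_def)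
qed

lemma fnet_norm_bound:
  fixes w :: "(real^'n1^'n0) \<times> (real^'n2^'n1)"
  assumes lip: "\<forall>u v. \<bar>\<sigma> u - \<sigma> v\<bar> \<le> \<bar>u - v\<bar>"
  shows "norm (fnet \<sigma> w x) \<le> (norm (sigbar \<sigma> (0::real^'n1)) + norm x) * (1 + (norm w)\<^sup>2)"
proof -
  define z where "z = transpose (fst w) *v x"
  define c0 where "c0 = norm (sigbar \<sigma> (0::real^'n1))"
  have "(norm (sigbar \<sigma> z - sigbar \<sigma> 0))\<^sup>2 \<le> (norm (z - 0))\<^sup>2" by (rule sigbar_lip[OF lip])
  then have l1: "norm (sigbar \<sigma> z - sigbar \<sigma> 0) \<le> norm (z - 0)" by (rule power2_le_imp_le) simp
  have l2: "norm (sigbar \<sigma> z) - norm (sigbar \<sigma> (0::real^'n1)) \<le> norm (sigbar \<sigma> z - sigbar \<sigma> 0)"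
    by (rule norm_triangle_ineq2)
  have sz: "norm (sigbar \<sigma> z) \<le> c0 + norm z" using l1 l2 unfolding c0_def by simp
  have nz: "norm z \<le> norm (fst w) * norm x" unfolding z_def by (rule norm_tmv_le)
  have f1: "norm (fst w) \<le> norm w" unfolding norm_prod_def by (rule real_sqrt_sum_squares_ge1)
  have f2: "norm (snd w) \<le> norm w" unfolding norm_prod_def by (rule real_sqrt_sum_squares_ge2)
  have w1: "norm w \<le> 1 + (norm w)\<^sup>2"
  proof (cases "norm w \<le> 1")
    case True
    then show ?thesis using zero_le_power2[of "norm w"] by linarith
  next
    case False
    then have "norm w * 1 \<le> norm w * norm w" by (intro mult_left_mono) auto
    then show ?thesis by (simp add: power2_eq_square)
  qed
  have c0: "0 \<le> c0" unfolding c0_def by simp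
  have "norm (fnet \<sigma> w x) \<le> norm (snd w) * norm (sigbar \<sigma> z)"
    unfolding fnet_def z_def by (rule norm_tmv_le)
  also have "\<dots> \<le> norm (snd w) * (c0 + norm (fst w) * norm x)"
    using sz nz by (intro mult_left_mono) auto
  also have "\<dots> = norm (snd w) * c0 + (norm (snd w) * norm (fst w)) * norm x"
    by (simp only: distrib_left mult.assoc)
  also have "\<dots> \<le> (1 + (norm w)\<^sup>2) * c0 + (1 + (norm w)\<^sup>2) * norm x"
  proof (rule add_mono)
    show "norm (snd w) * c0 \<le> (1 + (norm w)\<^sup>2) * c0"
      using f2 w1 c0 by (intro mult_right_mono) linarith+
    have "norm (snd w) * norm (fst w) \<le> norm w * norm w" using f1 f2 by (intro mult_mono) auto
    then have "norm (snd w) * norm (fst w) \<le> 1 + (norm w)\<^sup>2" by (simp add: power2_eq_square)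
    then show "(norm (snd w) * norm (fst w)) * norm x \<le> (1 + (norm w)\<^sup>2) * norm x"
      by (intro mult_right_mono) auto
  qed
  also have "\<dots> = (c0 + norm x) * (1 + (norm w)\<^sup>2)" by (simp only: distrib_left distrib_right mult.commute)
  finally show ?thesis unfolding c0_def .
qed

lemma exp2_lt: "exp (2::real) < 74 / 10"
proof -
  have "exp (2::real) = exp 1 * exp 1" by (simp add: exp_add[symmetric])
  also have "\<dots> < (272/100) * (272/100)"
    using e_less_272 by (intro mult_strict_mono) auto
  also have "\<dots> < 74/10" by simp
  finally show ?thesis .
qed

lemma key_log_ineq:
  fixes a \<gamma> :: real assumes a: "0 \<le> a" and g: "0 \<le> \<gamma>" "\<gamma> \<le> 3/2"
  shows "1 + ln (1 + 2 * \<gamma> * a) / 2 \<le> ln (3 + 3 * a)"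
proof -
  have p1: "0 < 1 + 2 * \<gamma> * a" using a g by (simp add: add_pos_nonneg)
  have "exp 2 * (1 + 2 * \<gamma> * a) \<le> 74/10 * (1 + 3 * a)"
  proof -
    have "exp 2 * (1 + 2 * \<gamma> * a) \<le> 74/10 * (1 + 2 * \<gamma> * a)"
      using exp2_lt p1 by (intro mult_right_mono) auto
    also have "\<dots> \<le> 74/10 * (1 + 3 * a)" using a g by (intro mult_left_mono) (auto simp: mult_right_mono)
    finally show ?thesis .
  qed
  also have "\<dots> \<le> (3 + 3 * a)\<^sup>2"
  proof -
    have "0 \<le> 9 * a\<^sup>2 - 42/10 * a + 16/10"
    proof -
      have "9 * a\<^sup>2 - 42/10 * a + 16/10 = 9 * (a - 7/30)\<^sup>2 + (16/10 - 49/100)"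
        by (simp add: power2_eq_square field_simps)
      then show ?thesis by (simp add: add_nonneg_nonneg)
    qed
    then show ?thesis by (simp add: power2_eq_square algebra_simps)
  qed
  finally have le: "exp 2 * (1 + 2 * \<gamma> * a) \<le> (3 + 3 * a)\<^sup>2" .
  have "2 + ln (1 + 2 * \<gamma> * a) = ln (exp 2 * (1 + 2 * \<gamma> * a))"
    using p1 by (simp add: ln_mult)
  also have "\<dots> \<le> ln ((3 + 3 * a)\<^sup>2)"
    using le p1 by (intro ln_mono) auto
  also have "\<dots> = 2 * ln (3 + 3 * a)"
  proof -
    have "0 < 3 + 3 * a" using a by simp
    then show ?thesis by (simp add: ln_realpow)
  qed
  finally show ?thesis by simp
qed

lemma final_ineq:
  fixes C \<beta> d N \<gamma> :: real
  assumes C: "0 \<le> C" and b: "0 < \<beta>" and d: "0 < d" and N: "0 < N" and g: "0 \<le> \<gamma>" "\<gamma> \<le> 3/2"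
  defines "a \<equiv> N * C / (\<beta> * d)"
  defines "t \<equiv> 1 / (1 + 2 * \<gamma> * a)"
  shows "\<gamma> * t * C + \<beta> / N * (d * (t + 1 - ln t) / 2) \<le> \<beta> * d / N * ln (3 + 3 * N * C / (d * \<beta>))"
proof -
  have a0: "0 \<le> a" unfolding a_def using C b d N by simp
  have p1: "0 < 1 + 2 * \<gamma> * a" using a0 g by (simp add: add_pos_nonneg)
  have lnt: "ln t = - ln (1 + 2 * \<gamma> * a)" unfolding t_def using p1 by (simp add: ln_div)
  have gC: "\<gamma> * t * C = \<beta> * d / N * (\<gamma> * a * t)"
    unfolding a_def using b d N by (simp add: field_simps)
  have tt: "t / 2 + \<gamma> * a * t = 1 / 2"
  proof -
    have "t / 2 + \<gamma> * a * t = t * (1 + 2 * \<gamma> * a) / 2" by (simp add: algebra_simps)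
    also have "\<dots> = 1 / 2" unfolding t_def using p1 by simp
    finally show ?thesis .
  qed
  have "\<gamma> * t * C + \<beta> / N * (d * (t + 1 - ln t) / 2) = \<beta> * d / N * ((t / 2 + \<gamma> * a * t) + 1 / 2 + ln (1 + 2 * \<gamma> * a) / 2)"
    unfolding gC lnt using N by (simp add: field_simps)
  also have "\<dots> = \<beta> * d / N * (1 + ln (1 + 2 * \<gamma> * a) / 2)" unfolding tt by simp
  also have "\<dots> \<le> \<beta> * d / N * ln (3 + 3 * a)"
    using key_log_ineq[OF a0 g] b d N by (intro mult_left_mono) auto
  also have "3 * a = 3 * N * C / (d * \<beta>)" unfolding a_def by (simp add: mult.commute)
  finally show ?thesis .
qed

lemma ennreal_mult_le: "0 \<le> a \<Longrightarrow> 0 \<le> b \<Longrightarrow> a * b \<le> c \<Longrightarrow> ennreal a * ennreal b \<le> ennreal c"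
  by (simp add: ennreal_mult[symmetric] ennreal_leI)

lemma fnet_diff_cont: assumes c: "continuous_on UNIV \<sigma>"
  shows "continuous_on UNIV (\<lambda>w. (norm (fnet \<sigma> w x - fnet \<sigma> m x))\<^sup>2)"
  by (intro continuous_intros fnet_cont[OF c]) 

lemma meas_fst_borel: assumes [measurable]: "g \<in> borel_measurable borel"
  shows "(\<lambda>w. g (fst w)) \<in> borel_measurable (borel :: ('a::euclidean_space \<times> 'b::euclidean_space) measure)"
proof -
  have "(\<lambda>w. g (fst w)) \<in> borel_measurable (borel \<Otimes>\<^sub>M (borel :: 'b measure))" by measurable
  then show ?thesis by (simp add: borel_prod)
qed

lemma meas_snd_borel: assumes [measurable]: "g \<in> borel_measurable borel"
  shows "(\<lambda>w. g (snd w)) \<in> borel_measurable (borel :: ('a::euclidean_space \<times> 'b::euclidean_space) measure)"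
proof -
  have "(\<lambda>w. g (snd w)) \<in> borel_measurable ((borel :: 'a measure) \<Otimes>\<^sub>M borel)" by measurable
  then show ?thesis by (simp add: borel_prod)
qed

lemma meas_lborel2: "f \<in> borel_measurable (borel :: ('a::euclidean_space \<times> 'b::euclidean_space) measure) \<Longrightarrow>
   f \<in> borel_measurable (lborel \<Otimes>\<^sub>M lborel)"
  by (simp add: lborel_prod)

lemma err_point:
  fixes m :: "(real^'n1^'n0) \<times> (real^'n2^'n1)" and x :: "real^'n0"
  assumes lip: "\<forall>u v. \<bar>\<sigma> u - \<sigma> v\<bar> \<le> \<bar>u - v\<bar>"
    and s1: "0 < s1" and s2: "0 < s2"
    and K: "\<And>z::real^'n1. (norm (sigbar \<sigma> z))\<^sup>2 \<le> K0 + K1 * (norm z)\<^sup>2" and K0: "0 \<le> K0" and K1: "0 \<le> K1"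
  shows "(\<integral>\<^sup>+ w. ennreal ((norm (fnet \<sigma> w x - fnet \<sigma> m x))\<^sup>2)
      \<partial>density lborel (\<lambda>w. ennreal (gd (fst m) (\<lambda>_. s1) (fst w) * gd (snd m) (\<lambda>_. s2) (snd w))))
    \<le> ennreal (2 * real CARD('n2) * s2\<^sup>2 * (K0 + K1 * ((norm (transpose (fst m) *v x))\<^sup>2 + real CARD('n1) * s1\<^sup>2 * (norm x)\<^sup>2))
       + 2 * (norm (snd m))\<^sup>2 * (real CARD('n1) * s1\<^sup>2 * (norm x)\<^sup>2))"
proof -
  define G1 where "G1 = gd (fst m) (\<lambda>_. s1)"
  define G2 where "G2 = gd (snd m) (\<lambda>_. s2)"
  define F where "F w = (norm (fnet \<sigma> w x - fnet \<sigma> m x))\<^sup>2" for w :: "(real^'n1^'n0) \<times> (real^'n2^'n1)"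
  define u where "u w1 = sigbar \<sigma> (transpose w1 *v x)" for w1 :: "real^'n1^'n0"
  define A where "A w1 w2 = (norm (transpose (w2 - snd m) *v u w1))\<^sup>2" for w1 :: "real^'n1^'n0" and w2 :: "real^'n2^'n1"
  define Bq where "Bq w1 = (norm (snd m))\<^sup>2 * (norm (transpose (w1 - fst m) *v x))\<^sup>2" for w1 :: "real^'n1^'n0"
  define a where "a = 2 * real CARD('n2) * s2\<^sup>2"
  have c: "continuous_on UNIV \<sigma>" by (rule lip_cont[OF lip])
  have Fm: "F \<in> borel_measurable borel"
    unfolding F_def by (rule borel_measurable_continuous_onI[OF fnet_diff_cont[OF c]])
  have G1m[measurable]: "G1 \<in> borel_measurable borel" unfolding G1_def by (rule gd_measurable)
  have G2m[measurable]: "G2 \<in> borel_measurable borel" unfolding G2_def by (rule gd_measurable)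
  note Fm[measurable]
  have G1f[measurable]: "(\<lambda>w::(real^'n1^'n0) \<times> (real^'n2^'n1). G1 (fst w)) \<in> borel_measurable borel"
    by (rule meas_fst_borel[OF G1m])
  have G2s[measurable]: "(\<lambda>w::(real^'n1^'n0) \<times> (real^'n2^'n1). G2 (snd w)) \<in> borel_measurable borel"
    by (rule meas_snd_borel[OF G2m])
  have GF: "(\<lambda>w. ennreal (G1 (fst w) * G2 (snd w)) * ennreal (F w)) \<in> borel_measurable borel"
    by measurable
  have G1n: "0 \<le> G1 w" for w unfolding G1_def by (rule gd_nonneg)
  have G2n: "0 \<le> G2 w" for w unfolding G2_def by (rule gd_nonneg)
  have s1': "\<And>b. b \<in> (Basis :: (real^'n1^'n0) set) \<Longrightarrow> 0 < (\<lambda>_. s1) b" using s1 by simp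
  have s2': "\<And>b. b \<in> (Basis :: (real^'n2^'n1) set) \<Longrightarrow> 0 < (\<lambda>_. s2) b" using s2 by simp
  have G1i: "integrable lborel G1" unfolding G1_def by (rule gd_one(1)) (simp add: s1)
  have G2i: "integrable lborel G2" unfolding G2_def by (rule gd_one(1)) (simp add: s2)
  have G1o: "(\<integral>w. G1 w \<partial>lborel) = 1" unfolding G1_def by (rule gd_one(2)) (simp add: s1)
  have G2o: "(\<integral>w. G2 w \<partial>lborel) = 1" unfolding G2_def by (rule gd_one(2)) (simp add: s2)
  have BQ0: "integrable lborel (\<lambda>w1. G1 w1 * (norm (transpose w1 *v x))\<^sup>2)"
    unfolding G1_def by (rule block_quad0(1)[OF s1])
  have BQ: "integrable lborel (\<lambda>w1. G1 w1 * (norm (transpose (w1 - fst m) *v x))\<^sup>2)"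
    unfolding G1_def by (rule block_quad(1)[OF s1])
  have "(\<integral>\<^sup>+ w. ennreal (F w) \<partial>density lborel (\<lambda>w. ennreal (G1 (fst w) * G2 (snd w)))) =
      (\<integral>\<^sup>+ w. ennreal (G1 (fst w) * G2 (snd w)) * ennreal (F w) \<partial>lborel)"
    by (rule nn_integral_density) (simp_all add: G1f G2s Fm)
  also have "\<dots> = (\<integral>\<^sup>+ w. ennreal (G1 (fst w) * G2 (snd w)) * ennreal (F w) \<partial>(lborel \<Otimes>\<^sub>M lborel))"
    by (simp only: lborel_prod)
  also have "\<dots> = (\<integral>\<^sup>+ w1. \<integral>\<^sup>+ w2. ennreal (G1 w1 * G2 w2) * ennreal (F (w1, w2)) \<partial>lborel \<partial>lborel)"
  proof -
    have "(\<lambda>w. ennreal (G1 (fst w) * G2 (snd w)) * ennreal (F w)) \<in> borel_measurable (lborel \<Otimes>\<^sub>M lborel)"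
      by (rule meas_lborel2[OF GF])
    from lborel.nn_integral_fst[OF this] show ?thesis by simp
  qed
  also have "\<dots> \<le> (\<integral>\<^sup>+ w1. ennreal (G1 w1 * (a * (K0 + K1 * (norm (transpose w1 *v x))\<^sup>2) + 2 * Bq w1)) \<partial>lborel)"
  proof (rule nn_integral_mono)
    fix w1 :: "real^'n1^'n0"
    have iA: "integrable lborel (\<lambda>w2. G2 w2 * A w1 w2)"
      unfolding G2_def A_def by (rule block_quad(1)[OF s2])
    have i2: "integrable lborel (\<lambda>w2. G1 w1 * (2 * (G2 w2 * A w1 w2) + 2 * Bq w1 * G2 w2))"
      by (intro integrable_mult_right Bochner_Integration.integrable_add iA G2i)
    have "(\<integral>\<^sup>+ w2. ennreal (G1 w1 * G2 w2) * ennreal (F (w1, w2)) \<partial>lborel) \<le>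
        (\<integral>\<^sup>+ w2. ennreal (G1 w1 * (2 * (G2 w2 * A w1 w2) + 2 * Bq w1 * G2 w2)) \<partial>lborel)"
    proof (rule nn_integral_mono)
      fix w2
      have "F (w1, w2) \<le> 2 * A w1 w2 + 2 * Bq w1"
        unfolding F_def A_def Bq_def u_def using fnet_diff_bound[OF lip, of "(w1, w2)" x m] by simp
      then have "G1 w1 * G2 w2 * F (w1, w2) \<le> G1 w1 * G2 w2 * (2 * A w1 w2 + 2 * Bq w1)"
        by (intro mult_left_mono) (auto intro: mult_nonneg_nonneg G1n G2n)
      also have "\<dots> = G1 w1 * (2 * (G2 w2 * A w1 w2) + 2 * Bq w1 * G2 w2)" by (simp add: algebra_simps)
      finally show "ennreal (G1 w1 * G2 w2) * ennreal (F (w1, w2)) \<le> ennreal (G1 w1 * (2 * (G2 w2 * A w1 w2) + 2 * Bq w1 * G2 w2))"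
        by (intro ennreal_mult_le) (auto intro: mult_nonneg_nonneg G1n G2n simp: F_def)
    qed
    also have "\<dots> = ennreal (\<integral>w2. G1 w1 * (2 * (G2 w2 * A w1 w2) + 2 * Bq w1 * G2 w2) \<partial>lborel)"
      by (rule nn_integral_eq_integral[OF i2]) (auto intro!: mult_nonneg_nonneg add_nonneg_nonneg G1n G2n simp: A_def Bq_def)
    also have "(\<integral>w2. G1 w1 * (2 * (G2 w2 * A w1 w2) + 2 * Bq w1 * G2 w2) \<partial>lborel) = G1 w1 * (a * (norm (u w1))\<^sup>2 + 2 * Bq w1)"
    proof -
      have "(\<integral>w2. G1 w1 * (2 * (G2 w2 * A w1 w2) + 2 * Bq w1 * G2 w2) \<partial>lborel) =
          G1 w1 * ((\<integral>w2. 2 * (G2 w2 * A w1 w2) \<partial>lborel) + (\<integral>w2. 2 * Bq w1 * G2 w2 \<partial>lborel))"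
        by (simp only: integral_mult_right_zero Bochner_Integration.integral_add[OF integrable_mult_right[OF iA] integrable_mult_right[OF G2i]])
      also have "\<dots> = G1 w1 * (2 * (real CARD('n2) * s2\<^sup>2 * (norm (u w1))\<^sup>2) + 2 * Bq w1)"
        by (simp only: integral_mult_right_zero block_quad(2)[OF s2, where m="snd m" and v="u w1", folded G2_def] G2o A_def mult_1_right)
      finally show ?thesis unfolding a_def by (simp add: algebra_simps)
    qed
    also have "ennreal (G1 w1 * (a * (norm (u w1))\<^sup>2 + 2 * Bq w1)) \<le> ennreal (G1 w1 * (a * (K0 + K1 * (norm (transpose w1 *v x))\<^sup>2) + 2 * Bq w1))"
    proof -
      have "a * (norm (u w1))\<^sup>2 \<le> a * (K0 + K1 * (norm (transpose w1 *v x))\<^sup>2)"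
        unfolding u_def a_def using K by (intro mult_left_mono) auto
      then have "G1 w1 * (a * (norm (u w1))\<^sup>2 + 2 * Bq w1) \<le> G1 w1 * (a * (K0 + K1 * (norm (transpose w1 *v x))\<^sup>2) + 2 * Bq w1)"
        by (intro mult_left_mono G1n) simp
      then show ?thesis by (rule ennreal_leI)
    qed
    finally show "(\<integral>\<^sup>+ w2. ennreal (G1 w1 * G2 w2) * ennreal (F (w1, w2)) \<partial>lborel) \<le> ennreal (G1 w1 * (a * (K0 + K1 * (norm (transpose w1 *v x))\<^sup>2) + 2 * Bq w1))" .
  qed
  also have "\<dots> = ennreal (\<integral>w1. G1 w1 * (a * (K0 + K1 * (norm (transpose w1 *v x))\<^sup>2) + 2 * Bq w1) \<partial>lborel)"
  proof -
    have e: "(\<lambda>w1. G1 w1 * (a * (K0 + K1 * (norm (transpose w1 *v x))\<^sup>2) + 2 * Bq w1)) =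
      (\<lambda>w1. (a * K0) * G1 w1 + ((a * K1) * (G1 w1 * (norm (transpose w1 *v x))\<^sup>2) + (2 * (norm (snd m))\<^sup>2) * (G1 w1 * (norm (transpose (w1 - fst m) *v x))\<^sup>2)))"
      by (rule ext) (simp add: Bq_def algebra_simps)
    have ii: "integrable lborel (\<lambda>w1. G1 w1 * (a * (K0 + K1 * (norm (transpose w1 *v x))\<^sup>2) + 2 * Bq w1))"
      unfolding e
      by (intro Bochner_Integration.integrable_add integrable_mult_right G1i BQ0 BQ)
    show ?thesis
      by (rule nn_integral_eq_integral[OF ii]) (auto intro!: mult_nonneg_nonneg add_nonneg_nonneg G1n K0 K1 simp: a_def Bq_def)
  qed
  also have "(\<integral>w1. G1 w1 * (a * (K0 + K1 * (norm (transpose w1 *v x))\<^sup>2) + 2 * Bq w1) \<partial>lborel) =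
     a * (K0 + K1 * ((norm (transpose (fst m) *v x))\<^sup>2 + real CARD('n1) * s1\<^sup>2 * (norm x)\<^sup>2))
       + 2 * (norm (snd m))\<^sup>2 * (real CARD('n1) * s1\<^sup>2 * (norm x)\<^sup>2)"
  proof -
    have e: "(\<lambda>w1. G1 w1 * (a * (K0 + K1 * (norm (transpose w1 *v x))\<^sup>2) + 2 * Bq w1)) =
      (\<lambda>w1. (a * K0) * G1 w1 + ((a * K1) * (G1 w1 * (norm (transpose w1 *v x))\<^sup>2) + (2 * (norm (snd m))\<^sup>2) * (G1 w1 * (norm (transpose (w1 - fst m) *v x))\<^sup>2)))"
      by (rule ext) (simp add: Bq_def algebra_simps)
    have i1: "integrable lborel (\<lambda>w1. (a * K0) * G1 w1)"
      by (intro integrable_mult_right G1i)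
    have i2: "integrable lborel (\<lambda>w1. (a * K1) * (G1 w1 * (norm (transpose w1 *v x))\<^sup>2))"
      unfolding G1_def by (intro integrable_mult_right block_quad0(1)[OF s1])
    have i3: "integrable lborel (\<lambda>w1. (2 * (norm (snd m))\<^sup>2) * (G1 w1 * (norm (transpose (w1 - fst m) *v x))\<^sup>2))"
      unfolding G1_def by (intro integrable_mult_right block_quad(1)[OF s1])
    have "(\<integral>w1. G1 w1 * (a * (K0 + K1 * (norm (transpose w1 *v x))\<^sup>2) + 2 * Bq w1) \<partial>lborel) =
       (\<integral>w1. (a * K0) * G1 w1 \<partial>lborel) + ((\<integral>w1. (a * K1) * (G1 w1 * (norm (transpose w1 *v x))\<^sup>2) \<partial>lborel) +
        (\<integral>w1. (2 * (norm (snd m))\<^sup>2) * (G1 w1 * (norm (transpose (w1 - fst m) *v x))\<^sup>2) \<partial>lborel))"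
      unfolding e
      by (simp only: Bochner_Integration.integral_add[OF i1 Bochner_Integration.integrable_add[OF i2 i3]]
          Bochner_Integration.integral_add[OF i2 i3])
    also have "\<dots> = (a * K0) * 1 + ((a * K1) * ((norm (transpose (fst m) *v x))\<^sup>2 + real CARD('n1) * s1\<^sup>2 * (norm x)\<^sup>2)
        + (2 * (norm (snd m))\<^sup>2) * (real CARD('n1) * s1\<^sup>2 * (norm x)\<^sup>2))"
      unfolding G1_def
      by (simp only: integral_mult_right_zero G1o[unfolded G1_def] block_quad0(2)[OF s1] block_quad(2)[OF s1])
    finally show ?thesis by (simp add: algebra_simps)
  qed
  finally show ?thesis unfolding F_def G1_def G2_def a_def .
qed

lemma gd_nn_one: assumes s: "\<And>b. b \<in> Basis \<Longrightarrow> 0 < s b"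
  shows "(\<integral>\<^sup>+ w. ennreal (gd m s w) \<partial>lborel) = 1"
proof -
  have "(\<integral>\<^sup>+ w. ennreal (gd m s w) \<partial>lborel) = ennreal (\<integral>w. gd m s w \<partial>lborel)"
  proof (rule nn_integral_eq_integral)
    show "integrable lborel (gd m s)" by (rule gd_one(1)) (simp add: s)
  qed (rule AE_I2, rule gd_nonneg)
  moreover have "(\<integral>w. gd m s w \<partial>lborel) = 1" by (rule gd_one(2)) (simp add: s)
  ultimately show ?thesis by simp
qed

lemma prob_gd: assumes s: "\<And>b. b \<in> Basis \<Longrightarrow> 0 < s b"
  shows "prob_space (density lborel (\<lambda>w. ennreal (gd m s w)))"
proof (rule prob_spaceI)
  have "emeasure (density lborel (\<lambda>w. ennreal (gd m s w))) UNIV = (\<integral>\<^sup>+ w. ennreal (gd m s w) * indicator UNIV w \<partial>lborel)"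
    by (rule emeasure_density) simp_all
  also have "\<dots> = 1" using gd_nn_one[OF s] by simp
  finally show "emeasure (density lborel (\<lambda>w. ennreal (gd m s w))) (space (density lborel (\<lambda>w. ennreal (gd m s w)))) = 1"
    by simp
qed

lemma phi_nonneg: "0 < (t::real) \<Longrightarrow> 0 \<le> t * ln t - t + 1"
proof -
  assume t: "0 < t"
  have "ln (1 / t) \<le> 1 / t - 1" using t by (intro ln_le_minus_one) simp
  then have "- ln t \<le> 1 / t - 1" using t by (simp add: ln_div)
  then have "t * (- ln t) \<le> t * (1 / t - 1)" using t by (intro mult_left_mono) auto
  moreover have "t * (1 / t - 1) = 1 - t" using t by (simp add: field_simps)
  ultimately show ?thesis by (simp add: algebra_simps)
qed

lemma KL_gd:
  fixes m :: "'e::euclidean_space"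
  assumes s: "\<And>b. b \<in> Basis \<Longrightarrow> 0 < s b" and r: "\<And>b. b \<in> Basis \<Longrightarrow> 0 < r b"
  shows "KL_div (density lborel (\<lambda>w. ennreal (gd m s w))) (density lborel (\<lambda>w. ennreal (gd 0 r w))) =
      ennreal (\<Sum>b\<in>Basis. ln (r b / s b) + ((s b)\<^sup>2 + (m \<bullet> b)\<^sup>2) / (2 * (r b)\<^sup>2) - 1 / 2)"
proof -
  define P where "P = density lborel (\<lambda>w. ennreal (gd m s w))"
  define Q where "Q = density lborel (\<lambda>w. ennreal (gd 0 r w))"
  define g where "g w = gd m s w / gd 0 r w" for w
  have Qp: "0 < gd 0 r w" for w by (rule gd_pos[OF r])
  have Pp: "0 < gd m s w" for w by (rule gd_pos[OF s])
  have gm: "g \<in> borel_measurable borel" unfolding g_def by measurable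
  have gme: "(\<lambda>w. ennreal (g w)) \<in> borel_measurable borel" using gm by measurable
  have gn: "0 < g w" for w unfolding g_def using Qp Pp by simp
  have PQ: "density Q (\<lambda>w. ennreal (g w)) = P"
  proof -
    have "density Q (\<lambda>w. ennreal (g w)) = density lborel (\<lambda>w. ennreal (gd 0 r w) * ennreal (g w))"
      unfolding Q_def by (rule density_density_eq) (simp_all add: gme)
    also have "(\<lambda>w. ennreal (gd 0 r w) * ennreal (g w)) = (\<lambda>w. ennreal (gd m s w))"
    proof (rule ext)
      fix w
      have "gd 0 r w * g w = gd m s w" unfolding g_def using Qp[of w] by simp
      then show "ennreal (gd 0 r w) * ennreal (g w) = ennreal (gd m s w)"
        using Qp[of w] gn[of w] by (simp add: ennreal_mult[symmetric])
    qed
    finally show ?thesis unfolding P_def .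
  qed
  have sets: "sets P = sets Q" unfolding P_def Q_def by simp
  have ac: "absolutely_continuous Q P"
    unfolding PQ[symmetric] by (rule absolutely_continuousI_density) (simp add: Q_def gme)
  have sfQ: "sigma_finite_measure Q"
    unfolding Q_def by (rule prob_space_imp_sigma_finite[OF prob_gd[OF r]])
  have RN: "AE w in Q. ennreal (g w) = RN_deriv Q P w"
    by (rule sigma_finite_measure.RN_deriv_unique[OF sfQ _ PQ]) (simp add: Q_def gme)
  define \<phi> where "\<phi> t = t * ln t - t + 1" for t :: real
  have "KL_div P Q = (\<integral>\<^sup>+ w. ennreal (\<phi> (enn2real (RN_deriv Q P w))) \<partial>Q)"
    unfolding KL_div_def \<phi>_def using ac sets by (simp add: Let_def)
  also have "\<dots> = (\<integral>\<^sup>+ w. ennreal (\<phi> (g w)) \<partial>Q)"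
  proof (rule nn_integral_cong_AE)
    show "AE w in Q. ennreal (\<phi> (enn2real (RN_deriv Q P w))) = ennreal (\<phi> (g w))" using RN
    proof eventually_elim
      fix w assume "ennreal (g w) = RN_deriv Q P w"
      then have "enn2real (RN_deriv Q P w) = g w" using gn[of w] by (metis enn2real_ennreal less_imp_le)
      then show "ennreal (\<phi> (enn2real (RN_deriv Q P w))) = ennreal (\<phi> (g w))" by simp
    qed
  qed
  also have "\<dots> = (\<integral>\<^sup>+ w. ennreal (gd 0 r w) * ennreal (\<phi> (g w)) \<partial>lborel)"
  proof -
    have "(\<lambda>w. ennreal (\<phi> (g w))) \<in> borel_measurable borel" unfolding \<phi>_def using gm by measurable
    then show ?thesis unfolding Q_def by (intro nn_integral_density) simp_all
  qed
  also have "\<dots> = (\<integral>\<^sup>+ w. ennreal (gd m s w * (ln (gd m s w) - ln (gd 0 r w)) - gd m s w + gd 0 r w) \<partial>lborel)"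
  proof (rule nn_integral_cong)
    fix w
    have e: "gd 0 r w * \<phi> (g w) = gd m s w * (ln (gd m s w) - ln (gd 0 r w)) - gd m s w + gd 0 r w"
      unfolding \<phi>_def g_def using Qp[of w] Pp[of w] by (simp add: ln_div field_simps)
    have "0 \<le> \<phi> (g w)" unfolding \<phi>_def by (rule phi_nonneg[OF gn])
    then show "ennreal (gd 0 r w) * ennreal (\<phi> (g w)) = ennreal (gd m s w * (ln (gd m s w) - ln (gd 0 r w)) - gd m s w + gd 0 r w)"
      using Qp[of w] by (simp add: ennreal_mult[symmetric] e)
  qed
  also have "\<dots> = ennreal (\<integral>w. gd m s w * (ln (gd m s w) - ln (gd 0 r w)) - gd m s w + gd 0 r w \<partial>lborel)"
  proof (rule nn_integral_eq_integral)
    show "integrable lborel (\<lambda>w. gd m s w * (ln (gd m s w) - ln (gd 0 r w)) - gd m s w + gd 0 r w)"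
      by (intro Bochner_Integration.integrable_add Bochner_Integration.integrable_diff gd_kl(1)[OF s r] gd_one(1)[OF s] gd_one(1)[OF r])
    show "AE w in lborel. 0 \<le> gd m s w * (ln (gd m s w) - ln (gd 0 r w)) - gd m s w + gd 0 r w"
    proof (rule AE_I2)
      fix w
      have e: "gd 0 r w * \<phi> (g w) = gd m s w * (ln (gd m s w) - ln (gd 0 r w)) - gd m s w + gd 0 r w"
        unfolding \<phi>_def g_def using Qp[of w] Pp[of w] by (simp add: ln_div field_simps)
      have "0 \<le> \<phi> (g w)" unfolding \<phi>_def by (rule phi_nonneg[OF gn])
      then show "0 \<le> gd m s w * (ln (gd m s w) - ln (gd 0 r w)) - gd m s w + gd 0 r w"
        unfolding e[symmetric] using Qp[of w] by simp
    qed
  qed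
  also have "(\<integral>w. gd m s w * (ln (gd m s w) - ln (gd 0 r w)) - gd m s w + gd 0 r w \<partial>lborel) =
      (\<integral>w. gd m s w * (ln (gd m s w) - ln (gd 0 r w)) \<partial>lborel) - (\<integral>w. gd m s w \<partial>lborel) + (\<integral>w. gd 0 r w \<partial>lborel)"
    by (simp only: Bochner_Integration.integral_add[OF Bochner_Integration.integrable_diff[OF gd_kl(1)[OF s r] gd_one(1)[OF s]] gd_one(1)[OF r]]
        Bochner_Integration.integral_diff[OF gd_kl(1)[OF s r] gd_one(1)[OF s]])
  also have "\<dots> = (\<Sum>b\<in>Basis. ln (r b / s b) + ((s b)\<^sup>2 + (m \<bullet> b)\<^sup>2) / (2 * (r b)\<^sup>2) - 1 / 2)"
    by (simp only: gd_kl(2)[OF s r] gd_one(2)[OF s] gd_one(2)[OF r] diff_add_cancel)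
  finally show ?thesis unfolding P_def Q_def .
qed

lemma meas_mu: assumes ms: "sets \<mu> = sets (restrict_space borel X)" and f: "f \<in> borel_measurable borel"
  shows "f \<in> borel_measurable \<mu>"
  by (subst measurable_cong_sets[OF ms refl]) (rule measurable_restrict_space1[OF f])

lemma meas_cont: "continuous_on UNIV f \<Longrightarrow> sets \<mu> = sets (restrict_space borel X) \<Longrightarrow> f \<in> borel_measurable \<mu>"
  by (rule meas_mu[OF _ borel_measurable_continuous_onI])

lemma norm_outer: "norm (outer (x :: real^'n)) = (norm x)\<^sup>2"
proof -
  have "(norm (outer x))\<^sup>2 = (\<Sum>i\<in>UNIV. (norm (outer x $ i))\<^sup>2)" by (rule norm_sq_vec_gen)
  also have "\<dots> = (\<Sum>i\<in>UNIV. \<Sum>j\<in>UNIV. (x $ i)\<^sup>2 * (x $ j)\<^sup>2)"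
    by (simp add: norm_sq_vec outer_def power_mult_distrib)
  also have "\<dots> = (\<Sum>i\<in>UNIV. (x $ i)\<^sup>2) * (\<Sum>j\<in>UNIV. (x $ j)\<^sup>2)"
    by (simp only: sum_product)
  also have "\<dots> = ((norm x)\<^sup>2) * ((norm x)\<^sup>2)"
    by (simp only: norm_sq_vec[of x])
  also have "\<dots> = ((norm x)\<^sup>2)\<^sup>2" by (rule power2_eq_square[symmetric])
  finally show ?thesis
    by (subst power2_eq_iff_nonneg[symmetric]) auto
qed

lemma quad_outer: "c \<bullet> (outer x *v c) = (c \<bullet> (x :: real^'n))\<^sup>2"
  by (simp add: inner_vec_def matrix_vector_mult_def outer_def power2_eq_square sum_product
      sum_distrib_left mult_ac)

lemma linear_quadform: "bounded_linear (\<lambda>M :: real^'n^'n. c \<bullet> (M *v c))"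
proof -
  have "linear (\<lambda>M :: real^'n^'n. c \<bullet> (M *v c))"
    by (rule linearI) (simp_all add: matrix_vector_mult_add_rdistrib inner_add_right
        matrix_vector_mult_def inner_vec_def sum_distrib_left distrib_left sum.distrib mult_ac)
  then show ?thesis by (simp add: linear_conv_bounded_linear)
qed

lemma col_inner: "(transpose A *v x) $ j = (\<chi> i. A $ i $ j) \<bullet> x"
  by (simp only: tmv_comp inner_colv)

lemma sum_col_sq: "(\<Sum>j\<in>UNIV. (norm (\<chi> i. (A :: real^'c^'r) $ i $ j))\<^sup>2) = (norm A)\<^sup>2"
  by (simp add: norm_sq_vec norm_sq_vec_gen) (subst sum.swap, simp)

lemma mbar_bound:
  fixes \<mu> :: "(real^'n0) measure" and A :: "real^'n1^'n0"
  assumes ms: "sets \<mu> = sets (restrict_space borel X)" and fin: "(\<integral>\<^sup>+ x. ennreal ((norm x)\<^sup>2) \<partial>\<mu>) < \<infinity>"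
  shows "(\<integral>\<^sup>+ x. ennreal ((norm (transpose A *v x))\<^sup>2) \<partial>\<mu>) \<le> ennreal (Mbar2sq \<mu> * (norm A)\<^sup>2)"
proof -
  have nm: "(\<lambda>x::real^'n0. (norm x)\<^sup>2) \<in> borel_measurable \<mu>"
    by (rule meas_cont[OF _ ms]) (intro continuous_intros)
  have inx: "integrable \<mu> (\<lambda>x. (norm x)\<^sup>2)"
    by (rule integrableI_nonneg[OF nm _ fin]) simp
  have iout: "integrable \<mu> (outer :: real^'n0 \<Rightarrow> real^'n0^'n0)"
  proof (rule Bochner_Integration.integrable_bound[OF inx])
    show "outer \<in> borel_measurable \<mu>"
      by (rule meas_cont[OF _ ms]) (unfold outer_def, intro continuous_intros)
    show "AE x in \<mu>. norm (outer x) \<le> norm ((norm x)\<^sup>2)" by (simp add: norm_outer)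
  qed
  define S where "S = (\<integral>x. outer x \<partial>\<mu>)"
  have Mb: "Mbar2sq \<mu> = onorm (\<lambda>v. S *v v)" unfolding Mbar2sq_def S_def ..
  have cq: "(\<integral>x. (c \<bullet> x)\<^sup>2 \<partial>\<mu>) \<le> Mbar2sq \<mu> * (norm c)\<^sup>2"
    and ci: "integrable \<mu> (\<lambda>x. (c \<bullet> x)\<^sup>2)" for c :: "real^'n0"
  proof -
    have "(\<integral>x. (c \<bullet> x)\<^sup>2 \<partial>\<mu>) = (\<integral>x. c \<bullet> (outer x *v c) \<partial>\<mu>)" by (simp only: quad_outer)
    also have "\<dots> = c \<bullet> (S *v c)"
      unfolding S_def by (rule integral_bounded_linear[OF linear_quadform iout])
    also have "\<dots> \<le> norm c * norm (S *v c)" by (rule norm_cauchy_schwarz)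
    also have "\<dots> \<le> norm c * (onorm (\<lambda>v. S *v v) * norm c)"
      by (intro mult_left_mono onorm) auto
    finally show "(\<integral>x. (c \<bullet> x)\<^sup>2 \<partial>\<mu>) \<le> Mbar2sq \<mu> * (norm c)\<^sup>2"
      unfolding Mb by (simp add: power2_eq_square mult_ac)
    have "integrable \<mu> (\<lambda>x. c \<bullet> (outer x *v c))"
      by (rule integrable_bounded_linear[OF linear_quadform iout])
    then show "integrable \<mu> (\<lambda>x. (c \<bullet> x)\<^sup>2)" by (simp only: quad_outer)
  qed
  have eq: "(\<lambda>x. (norm (transpose A *v x))\<^sup>2) = (\<lambda>x. \<Sum>j\<in>UNIV. ((\<chi> i. A $ i $ j) \<bullet> x)\<^sup>2)"
    by (rule ext) (simp only: norm_sq_vec col_inner)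
  have ii: "integrable \<mu> (\<lambda>x. (norm (transpose A *v x))\<^sup>2)"
    unfolding eq by (rule Bochner_Integration.integrable_sum) (rule ci)
  have "(\<integral>\<^sup>+ x. ennreal ((norm (transpose A *v x))\<^sup>2) \<partial>\<mu>) = ennreal (\<integral>x. (norm (transpose A *v x))\<^sup>2 \<partial>\<mu>)"
    by (rule nn_integral_eq_integral[OF ii]) simp
  also have "(\<integral>x. (norm (transpose A *v x))\<^sup>2 \<partial>\<mu>) = (\<Sum>j\<in>UNIV. \<integral>x. ((\<chi> i. A $ i $ j) \<bullet> x)\<^sup>2 \<partial>\<mu>)"
    unfolding eq by (rule Bochner_Integration.integral_sum) (rule ci)
  also have "\<dots> \<le> (\<Sum>j\<in>UNIV. Mbar2sq \<mu> * (norm (\<chi> i. A $ i $ j))\<^sup>2)"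
    by (intro sum_mono cq)
  also have "\<dots> = Mbar2sq \<mu> * (norm A)\<^sup>2"
    by (simp only: sum_distrib_left[symmetric] sum_col_sq)
  finally show ?thesis by (simp add: ennreal_leI)
qed

lemma id_meas_mu: "sets \<mu> = sets (restrict_space borel X) \<Longrightarrow> (\<lambda>x. x) \<in> measurable \<mu> borel"
  by (rule meas_mu) simp_all

lemma err_total:
  fixes m :: "(real^'n1^'n0) \<times> (real^'n2^'n1)" and \<mu> :: "(real^'n0) measure"
  assumes lip: "\<forall>u v. \<bar>\<sigma> u - \<sigma> v\<bar> \<le> \<bar>u - v\<bar>"
    and ms: "sets \<mu> = sets (restrict_space borel X)" and sf: "sigma_finite_measure \<mu>"
    and s1: "0 < s1" and s2: "0 < s2"
    and K: "\<And>z::real^'n1. (norm (sigbar \<sigma> z))\<^sup>2 \<le> K0 + K1 * (norm z)\<^sup>2" and K0: "0 \<le> K0" and K1: "0 \<le> K1"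
  shows "(\<integral>\<^sup>+ w. L2dist_sq \<mu> \<sigma> w m
      \<partial>density lborel (\<lambda>w. ennreal (gd (fst m) (\<lambda>_. s1) (fst w) * gd (snd m) (\<lambda>_. s2) (snd w))))
    \<le> (\<integral>\<^sup>+ x. ennreal (2 * real CARD('n2) * s2\<^sup>2 * (K0 + K1 * ((norm (transpose (fst m) *v x))\<^sup>2 + real CARD('n1) * s1\<^sup>2 * (norm x)\<^sup>2))
       + 2 * (norm (snd m))\<^sup>2 * (real CARD('n1) * s1\<^sup>2 * (norm x)\<^sup>2)) \<partial>\<mu>)"
proof -
  define P where "P = density lborel (\<lambda>w. ennreal (gd (fst m) (\<lambda>_. s1) (fst w) * gd (snd m) (\<lambda>_. s2) (snd w)))"
  define f where "f x w = ennreal ((norm (fnet \<sigma> w x - fnet \<sigma> m x))\<^sup>2)" for x and w :: "(real^'n1^'n0) \<times> (real^'n2^'n1)"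
  have c: "continuous_on UNIV \<sigma>" by (rule lip_cont[OF lip])
  have Pe: "P = density lborel (\<lambda>w. ennreal (gd m (\<lambda>b. sqrt 1 * (if snd b = 0 then s1 else s2)) w))"
  proof -
    have "gd m (\<lambda>b. sqrt 1 * (if snd b = 0 then s1 else s2)) w = gd (fst m) (\<lambda>_. s1) (fst w) * gd (snd m) (\<lambda>_. s2) (snd w)" for w
      using gd_pair_rr[of m "sqrt 1" s1 s2 w] by (simp add: rr_def)
    then show ?thesis unfolding P_def by simp
  qed
  have sfP: "sigma_finite_measure P"
    unfolding Pe by (rule prob_space_imp_sigma_finite[OF prob_gd]) (simp add: s1 s2)
  interpret pair_sigma_finite \<mu> P
    by (intro pair_sigma_finite.intro sf sfP)
  have setsP: "sets P = sets borel" unfolding P_def by simp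
  have hm: "(\<lambda>z. ennreal ((norm (fnet \<sigma> (snd z) (fst z) - fnet \<sigma> m (fst z)))\<^sup>2))
      \<in> borel_measurable (borel :: ((real^'n0) \<times> ((real^'n1^'n0) \<times> (real^'n2^'n1))) measure)"
  proof -
    have "continuous_on UNIV (\<lambda>z::(real^'n0) \<times> ((real^'n1^'n0) \<times> (real^'n2^'n1)). (norm (fnet \<sigma> (snd z) (fst z) - fnet \<sigma> m (fst z)))\<^sup>2)"
      by (intro continuous_intros fnet_cont[OF c])
    then have "(\<lambda>z::(real^'n0) \<times> ((real^'n1^'n0) \<times> (real^'n2^'n1)). (norm (fnet \<sigma> (snd z) (fst z) - fnet \<sigma> m (fst z)))\<^sup>2) \<in> borel_measurable borel"
      by (rule borel_measurable_continuous_onI)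
    then show ?thesis by measurable
  qed
  have idm: "(\<lambda>z. (fst z, snd z)) \<in> measurable (\<mu> \<Otimes>\<^sub>M P) (borel \<Otimes>\<^sub>M borel)"
  proof (rule measurable_Pair)
    show "fst \<in> measurable (\<mu> \<Otimes>\<^sub>M P) borel"
      by (rule measurable_compose[OF measurable_fst id_meas_mu[OF ms], unfolded comp_def]) 
    show "snd \<in> measurable (\<mu> \<Otimes>\<^sub>M P) borel"
      by (rule measurable_compose[OF measurable_snd measurable_ident_sets[OF setsP]])
  qed
  have fm: "case_prod f \<in> borel_measurable (\<mu> \<Otimes>\<^sub>M P)"
  proof -
    have "(\<lambda>z. ennreal ((norm (fnet \<sigma> (snd z) (fst z) - fnet \<sigma> m (fst z)))\<^sup>2)) \<circ> (\<lambda>z. (fst z, snd z)) \<in> borel_measurable (\<mu> \<Otimes>\<^sub>M P)"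
      by (rule measurable_comp[OF idm]) (simp add: borel_prod hm)
    then show ?thesis by (simp add: f_def case_prod_beta' comp_def)
  qed
  have "(\<integral>\<^sup>+ w. L2dist_sq \<mu> \<sigma> w m \<partial>P) = (\<integral>\<^sup>+ w. (\<integral>\<^sup>+ x. f x w \<partial>\<mu>) \<partial>P)"
    unfolding L2dist_sq_def f_def ..
  also have "\<dots> = (\<integral>\<^sup>+ x. (\<integral>\<^sup>+ w. f x w \<partial>P) \<partial>\<mu>)"
    by (rule Fubini'[OF fm])
  also have "\<dots> \<le> (\<integral>\<^sup>+ x. ennreal (2 * real CARD('n2) * s2\<^sup>2 * (K0 + K1 * ((norm (transpose (fst m) *v x))\<^sup>2 + real CARD('n1) * s1\<^sup>2 * (norm x)\<^sup>2))
       + 2 * (norm (snd m))\<^sup>2 * (real CARD('n1) * s1\<^sup>2 * (norm x)\<^sup>2)) \<partial>\<mu>)"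
    by (intro nn_integral_mono) (unfold f_def P_def, rule err_point[OF lip s1 s2 K K0 K1])
  finally show ?thesis unfolding P_def .
qed

lemma gd_normsq_int:
  fixes m :: "'e::euclidean_space"
  assumes s: "\<And>b. b \<in> Basis \<Longrightarrow> 0 < s b"
  shows "integrable lborel (\<lambda>w. gd m s w * (norm w)\<^sup>2)"
proof -
  have eq: "(\<lambda>w. gd m s w * (norm w)\<^sup>2) = (\<lambda>w. \<Sum>b\<in>Basis. gd m s w * (w \<bullet> b)\<^sup>2)"
    by (rule ext) (simp only: sum_Basis_sq[symmetric] sum_distrib_left)
  show ?thesis unfolding eq
    by (rule Bochner_Integration.integrable_sum) (rule gd_quad0(1), simp add: s)
qed

lemma P_in_P1:
  fixes m :: "(real^'n1^'n0) \<times> (real^'n2^'n1)"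
  assumes lip: "\<forall>u v. \<bar>\<sigma> u - \<sigma> v\<bar> \<le> \<bar>u - v\<bar>" and s: "\<And>b. b \<in> Basis \<Longrightarrow> 0 < s b"
  shows "density lborel (\<lambda>w. ennreal (gd m s w)) \<in> P1 \<sigma> X"
  unfolding P1_def
proof (intro CollectI conjI ballI)
  show "prob_space (density lborel (\<lambda>w. ennreal (gd m s w)))" by (rule prob_gd[OF s])
  show "sets (density lborel (\<lambda>w. ennreal (gd m s w))) = sets borel" by simp
  fix x :: "real^'n0" assume "x \<in> X"
  define K where "K = norm (sigbar \<sigma> (0::real^'n1)) + norm x"
  have K0: "0 \<le> K" unfolding K_def by simp
  have hm: "(\<lambda>w::(real^'n1^'n0) \<times> (real^'n2^'n1). ennreal (K * (1 + (norm w)\<^sup>2))) \<in> borel_measurable borel"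
    by measurable
  have ii: "integrable lborel (\<lambda>w. gd m s w * (K * (1 + (norm w)\<^sup>2)))"
  proof -
    have e: "(\<lambda>w. gd m s w * (K * (1 + (norm w)\<^sup>2))) = (\<lambda>w. K * gd m s w + K * (gd m s w * (norm w)\<^sup>2))"
      by (rule ext) (simp add: algebra_simps)
    show ?thesis unfolding e
      by (intro Bochner_Integration.integrable_add integrable_mult_right gd_normsq_int[OF s]) (rule gd_one(1), simp add: s)
  qed
  have "(\<integral>\<^sup>+ w. ennreal (norm (fnet \<sigma> w x)) \<partial>density lborel (\<lambda>w. ennreal (gd m s w))) \<le>
        (\<integral>\<^sup>+ w. ennreal (K * (1 + (norm w)\<^sup>2)) \<partial>density lborel (\<lambda>w. ennreal (gd m s w)))"
    by (intro nn_integral_mono ennreal_leI) (unfold K_def, rule fnet_norm_bound[OF lip])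
  also have "\<dots> = (\<integral>\<^sup>+ w. ennreal (gd m s w) * ennreal (K * (1 + (norm w)\<^sup>2)) \<partial>lborel)"
    by (rule nn_integral_density) (simp_all add: hm)
  also have "\<dots> = (\<integral>\<^sup>+ w. ennreal (gd m s w * (K * (1 + (norm w)\<^sup>2))) \<partial>lborel)"
    by (intro nn_integral_cong) (simp add: ennreal_mult[symmetric] gd_nonneg K0)
  also have "\<dots> = ennreal (\<integral>w. gd m s w * (K * (1 + (norm w)\<^sup>2)) \<partial>lborel)"
    by (rule nn_integral_eq_integral[OF ii]) (simp add: gd_nonneg K0)
  also have "\<dots> < \<infinity>" by simp
  finally show "(\<integral>\<^sup>+ w. ennreal (norm (fnet \<sigma> w x)) \<partial>density lborel (\<lambda>w. ennreal (gd m s w))) < \<infinity>" .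
qed

lemma KLsum_bound:
  fixes m :: "(real^'n1^'n0) \<times> (real^'n2^'n1)"
  assumes r1: "0 < \<rho>1" and r2: "0 < \<rho>2" and t: "0 < t"
    and m1: "norm (fst m) \<le> \<rho>1 * sqrt (2 * real CARD('n0) * real CARD('n1))"
    and m2: "norm (snd m) \<le> \<rho>2 * sqrt (2 * real CARD('n1) * real CARD('n2))"
  shows "(\<Sum>b\<in>Basis. ln ((1 * rr \<rho>1 \<rho>2 b) / (sqrt t * rr \<rho>1 \<rho>2 b)) + ((sqrt t * rr \<rho>1 \<rho>2 b)\<^sup>2 + (m \<bullet> b)\<^sup>2) / (2 * (1 * rr \<rho>1 \<rho>2 b)\<^sup>2) - 1 / 2)
     \<le> (real CARD('n0) * real CARD('n1) + real CARD('n1) * real CARD('n2)) * (t + 1 - ln t) / 2"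
proof -
  let ?r = "rr \<rho>1 \<rho>2 :: (real^'n1^'n0) \<times> (real^'n2^'n1) \<Rightarrow> real"
  have rp: "0 < ?r b" for b by (rule rr_pos[OF r1 r2])
  have termeq: "ln ((1 * ?r b) / (sqrt t * ?r b)) + ((sqrt t * ?r b)\<^sup>2 + (m \<bullet> b)\<^sup>2) / (2 * (1 * ?r b)\<^sup>2) - 1 / 2
      = (t - 1 - ln t) / 2 + (m \<bullet> b)\<^sup>2 / (2 * (?r b)\<^sup>2)" for b
  proof -
    have "ln ((1 * ?r b) / (sqrt t * ?r b)) = - ln t / 2"
      using rp[of b] t by (simp add: ln_div ln_sqrt)
    moreover have "((sqrt t * ?r b)\<^sup>2 + (m \<bullet> b)\<^sup>2) / (2 * (1 * ?r b)\<^sup>2) = t / 2 + (m \<bullet> b)\<^sup>2 / (2 * (?r b)\<^sup>2)"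
      using rp[of b] t by (simp add: power_mult_distrib field_simps)
    ultimately show ?thesis by simp
  qed
  have cardB: "real (card (Basis :: ((real^'n1^'n0) \<times> (real^'n2^'n1)) set)) = real CARD('n0) * real CARD('n1) + real CARD('n1) * real CARD('n2)"
    by simp
  have ms: "(\<Sum>b\<in>(Basis :: ((real^'n1^'n0) \<times> (real^'n2^'n1)) set). (m \<bullet> b)\<^sup>2 / (2 * (?r b)\<^sup>2)) =
      (norm (fst m))\<^sup>2 / (2 * \<rho>1\<^sup>2) + (norm (snd m))\<^sup>2 / (2 * \<rho>2\<^sup>2)"
  proof -
    have "(\<Sum>b\<in>(Basis :: ((real^'n1^'n0) \<times> (real^'n2^'n1)) set). (m \<bullet> b)\<^sup>2 / (2 * (?r b)\<^sup>2)) =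
      (\<Sum>u\<in>Basis. (fst m \<bullet> u)\<^sup>2 / (2 * \<rho>1\<^sup>2)) + (\<Sum>v\<in>Basis. (snd m \<bullet> v)\<^sup>2 / (2 * \<rho>2\<^sup>2))"
      unfolding sum_Basis_prod
      by (intro arg_cong2[where f="(+)"] sum.cong refl) (auto simp: rr_def inner_Pair_0 dest: nonzero_Basis)
    also have "\<dots> = (norm (fst m))\<^sup>2 / (2 * \<rho>1\<^sup>2) + (norm (snd m))\<^sup>2 / (2 * \<rho>2\<^sup>2)"
      by (simp only: sum_divide_distrib[symmetric] sum_Basis_sq)
    finally show ?thesis .
  qed
  have b1: "(norm (fst m))\<^sup>2 / (2 * \<rho>1\<^sup>2) \<le> real CARD('n0) * real CARD('n1)"
  proof -
    have "(norm (fst m))\<^sup>2 \<le> (\<rho>1 * sqrt (2 * real CARD('n0) * real CARD('n1)))\<^sup>2"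
      using m1 by (intro power_mono) auto
    also have "\<dots> = \<rho>1\<^sup>2 * (2 * real CARD('n0) * real CARD('n1))" by (simp add: power_mult_distrib)
    finally show ?thesis using r1 by (simp add: field_simps)
  qed
  have b2: "(norm (snd m))\<^sup>2 / (2 * \<rho>2\<^sup>2) \<le> real CARD('n1) * real CARD('n2)"
  proof -
    have "(norm (snd m))\<^sup>2 \<le> (\<rho>2 * sqrt (2 * real CARD('n1) * real CARD('n2)))\<^sup>2"
      using m2 by (intro power_mono) auto
    also have "\<dots> = \<rho>2\<^sup>2 * (2 * real CARD('n1) * real CARD('n2))" by (simp add: power_mult_distrib)
    finally show ?thesis using r2 by (simp add: field_simps)
  qed
  have "(\<Sum>b\<in>Basis. ln ((1 * ?r b) / (sqrt t * ?r b)) + ((sqrt t * ?r b)\<^sup>2 + (m \<bullet> b)\<^sup>2) / (2 * (1 * ?r b)\<^sup>2) - 1 / 2)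
     = (\<Sum>b\<in>(Basis :: ((real^'n1^'n0) \<times> (real^'n2^'n1)) set). (t - 1 - ln t) / 2) + (\<Sum>b\<in>(Basis :: ((real^'n1^'n0) \<times> (real^'n2^'n1)) set). (m \<bullet> b)\<^sup>2 / (2 * (?r b)\<^sup>2))"
    by (simp only: termeq sum.distrib)
  also have "\<dots> = (real CARD('n0) * real CARD('n1) + real CARD('n1) * real CARD('n2)) * ((t - 1 - ln t) / 2)
      + ((norm (fst m))\<^sup>2 / (2 * \<rho>1\<^sup>2) + (norm (snd m))\<^sup>2 / (2 * \<rho>2\<^sup>2))"
    by (simp only: ms sum_constant cardB[symmetric])
  also have "\<dots> \<le> (real CARD('n0) * real CARD('n1) + real CARD('n1) * real CARD('n2)) * ((t - 1 - ln t) / 2)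
      + (real CARD('n0) * real CARD('n1) + real CARD('n1) * real CARD('n2))"
    using b1 b2 by simp
  also have "\<dots> = (real CARD('n0) * real CARD('n1) + real CARD('n1) * real CARD('n2)) * (t + 1 - ln t) / 2"
    by (simp add: field_simps)
  finally show ?thesis .
qed

lemma rem_bound:
  fixes X :: "(real^'n0) set" and \<mu> :: "(real^'n0) measure" and \<sigma> :: "real \<Rightarrow> real"
    and wb :: "(real^'n1^'n0) \<times> (real^'n2^'n1)"
  assumes lip: "\<forall>u v. \<bar>\<sigma> u - \<sigma> v\<bar> \<le> \<bar>u - v\<bar>"
    and ms: "sets \<mu> = sets (restrict_space borel X)" and sf: "sigma_finite_measure \<mu>"
    and r1: "0 < \<rho>1" and r2: "0 < \<rho>2" and beta: "0 < \<beta>" and t: "0 < t"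
    and K: "\<And>z::real^'n1. (norm (sigbar \<sigma> z))\<^sup>2 \<le> K0 + K1 * (norm z)\<^sup>2" and K0: "0 \<le> K0" and K1: "0 \<le> K1"
    and m1: "norm (fst wb) \<le> \<rho>1 * sqrt (2 * real CARD('n0) * real CARD('n1))"
    and m2: "norm (snd wb) \<le> \<rho>2 * sqrt (2 * real CARD('n1) * real CARD('n2))"
    and E0: "0 \<le> E"
    and E: "(\<integral>\<^sup>+ x. ennreal (2 * real CARD('n2) * (sqrt t * \<rho>2)\<^sup>2 * (K0 + K1 * ((norm (transpose (fst wb) *v x))\<^sup>2 + real CARD('n1) * (sqrt t * \<rho>1)\<^sup>2 * (norm x)\<^sup>2))
       + 2 * (norm (snd wb))\<^sup>2 * (real CARD('n1) * (sqrt t * \<rho>1)\<^sup>2 * (norm x)\<^sup>2)) \<partial>\<mu>) \<le> ennreal E"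
  shows "Rem \<beta> n X \<mu> \<sigma> (gauss_prior \<rho>1 \<rho>2) wb \<le>
     ennreal (E + \<beta> / real n * ((real CARD('n0) * real CARD('n1) + real CARD('n1) * real CARD('n2)) * (t + 1 - ln t) / 2))"
proof -
  define s where "s b = sqrt t * rr \<rho>1 \<rho>2 b" for b :: "(real^'n1^'n0) \<times> (real^'n2^'n1)"
  define P where "P = density lborel (\<lambda>w. ennreal (gd wb s w))"
  define d where "d = real CARD('n0) * real CARD('n1) + real CARD('n1) * real CARD('n2)"
  have sp: "0 < s b" for b unfolding s_def using t rr_pos[OF r1 r2, of b] by (intro mult_pos_pos) auto
  have rp: "0 < 1 * rr \<rho>1 \<rho>2 b" for b :: "(real^'n1^'n0) \<times> (real^'n2^'n1)" using rr_pos[OF r1 r2] by simp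
  have PP1: "P \<in> P1 \<sigma> X" unfolding P_def by (rule P_in_P1[OF lip sp])
  have r0: "Rem \<beta> n X \<mu> \<sigma> (gauss_prior \<rho>1 \<rho>2) wb \<le>
      (\<integral>\<^sup>+ w. L2dist_sq \<mu> \<sigma> w wb \<partial>P) + ennreal (\<beta> / real n) * KL_div P (gauss_prior \<rho>1 \<rho>2)"
    unfolding Rem_def by (rule INF_lower[OF PP1])
  have l: "(\<integral>\<^sup>+ w. L2dist_sq \<mu> \<sigma> w wb \<partial>P) \<le> ennreal E"
  proof -
    have Pe: "P = density lborel (\<lambda>w. ennreal (gd (fst wb) (\<lambda>_. sqrt t * \<rho>1) (fst w) * gd (snd wb) (\<lambda>_. sqrt t * \<rho>2) (snd w)))"
      unfolding P_def s_def by (simp only: gd_pair_rr)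
    have p1: "0 < sqrt t * \<rho>1" using t r1 by simp
    have p2: "0 < sqrt t * \<rho>2" using t r2 by simp
    have "(\<integral>\<^sup>+ w. L2dist_sq \<mu> \<sigma> w wb \<partial>P) \<le> (\<integral>\<^sup>+ x. ennreal (2 * real CARD('n2) * (sqrt t * \<rho>2)\<^sup>2 * (K0 + K1 * ((norm (transpose (fst wb) *v x))\<^sup>2 + real CARD('n1) * (sqrt t * \<rho>1)\<^sup>2 * (norm x)\<^sup>2))
       + 2 * (norm (snd wb))\<^sup>2 * (real CARD('n1) * (sqrt t * \<rho>1)\<^sup>2 * (norm x)\<^sup>2)) \<partial>\<mu>)"
      unfolding Pe by (rule err_total[OF lip ms sf p1 p2 K K0 K1])
    then show ?thesis using E by (rule order_trans)
  qed
  have k: "KL_div P (gauss_prior \<rho>1 \<rho>2) \<le> ennreal (d * (t + 1 - ln t) / 2)"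
  proof -
    have "KL_div P (gauss_prior \<rho>1 \<rho>2) = ennreal (\<Sum>b\<in>Basis. ln ((1 * rr \<rho>1 \<rho>2 b) / s b) + ((s b)\<^sup>2 + (wb \<bullet> b)\<^sup>2) / (2 * (1 * rr \<rho>1 \<rho>2 b)\<^sup>2) - 1 / 2)"
      unfolding P_def gauss_prior_gd by (rule KL_gd[OF sp rp])
    also have "\<dots> \<le> ennreal (d * (t + 1 - ln t) / 2)"
      unfolding s_def d_def by (intro ennreal_leI KLsum_bound[OF r1 r2 t m1 m2])
    finally show ?thesis .
  qed
  have main: "Rem \<beta> n X \<mu> \<sigma> (gauss_prior \<rho>1 \<rho>2) wb \<le> ennreal E + ennreal (\<beta> / real n) * ennreal (d * (t + 1 - ln t) / 2)"
    using r0 add_mono[OF l mult_left_mono[OF k]] by (rule order_trans) simp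
  have lt: "ln t \<le> t - 1" by (rule ln_le_minus_one[OF t])
  have dpos: "0 \<le> d" unfolding d_def by simp
  have nn: "0 \<le> d * (t + 1 - ln t) / 2" using lt dpos by simp
  have bn: "0 \<le> \<beta> / real n" using beta by simp
  have "ennreal E + ennreal (\<beta> / real n) * ennreal (d * (t + 1 - ln t) / 2) = ennreal (E + \<beta> / real n * (d * (t + 1 - ln t) / 2))"
    by (simp only: ennreal_mult[OF bn nn, symmetric] ennreal_plus[OF E0 mult_nonneg_nonneg[OF bn nn], symmetric])
  with main show ?thesis unfolding d_def by simp
qed

lemma nn_int_affine:
  fixes \<mu> :: "(real^'n) measure"
  assumes ms: "sets \<mu> = sets (restrict_space borel X)" and I: "(\<integral>\<^sup>+ x. ennreal ((norm x)\<^sup>2) \<partial>\<mu>) = ennreal I"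
    and I0: "0 \<le> I" and a: "0 \<le> a" and b: "0 \<le> b" and V: "emeasure \<mu> (space \<mu>) = ennreal V" and V0: "0 \<le> V"
  shows "(\<integral>\<^sup>+ x. ennreal (a + b * (norm x)\<^sup>2) \<partial>\<mu>) = ennreal (a * V + b * I)"
proof -
  have nr: "(\<lambda>x::real^'n. (norm x)\<^sup>2) \<in> borel_measurable \<mu>"
    by (rule meas_cont[OF _ ms]) (intro continuous_intros)
  have nm: "(\<lambda>x::real^'n. ennreal ((norm x)\<^sup>2)) \<in> borel_measurable \<mu>"
    using nr by measurable
  have "(\<integral>\<^sup>+ x. ennreal (a + b * (norm x)\<^sup>2) \<partial>\<mu>) = (\<integral>\<^sup>+ x. ennreal a + ennreal b * ennreal ((norm x)\<^sup>2) \<partial>\<mu>)"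
    using a b by (intro nn_integral_cong) (simp add: ennreal_plus ennreal_mult)
  also have "\<dots> = (\<integral>\<^sup>+ x. ennreal a \<partial>\<mu>) + (\<integral>\<^sup>+ x. ennreal b * ennreal ((norm x)\<^sup>2) \<partial>\<mu>)"
  proof (rule nn_integral_add)
    show "(\<lambda>x. ennreal b * ennreal ((norm x)\<^sup>2)) \<in> borel_measurable \<mu>" using nm by measurable
  qed simp
  also have "(\<integral>\<^sup>+ x. ennreal b * ennreal ((norm x)\<^sup>2) \<partial>\<mu>) = ennreal b * ennreal I"
    by (subst nn_integral_cmult[OF nm]) (simp add: I)
  also have "(\<integral>\<^sup>+ x. ennreal a \<partial>\<mu>) = ennreal a * ennreal V" by (simp add: V)
  finally show ?thesis using a b I0 V0 by (simp add: ennreal_plus ennreal_mult)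
qed

lemma nn_int_case2:
  fixes \<mu> :: "(real^'n0) measure" and A :: "real^'n1^'n0"
  assumes ms: "sets \<mu> = sets (restrict_space borel X)" and I: "(\<integral>\<^sup>+ x. ennreal ((norm x)\<^sup>2) \<partial>\<mu>) = ennreal I"
    and I0: "0 \<le> I" and a: "0 \<le> a" and b: "0 \<le> b"
  shows "(\<integral>\<^sup>+ x. ennreal (a * (norm (transpose A *v x))\<^sup>2 + b * (norm x)\<^sup>2) \<partial>\<mu>) \<le> ennreal (a * (Mbar2sq \<mu> * (norm A)\<^sup>2) + b * I)"
proof -
  have nr: "(\<lambda>x::real^'n0. (norm x)\<^sup>2) \<in> borel_measurable \<mu>"
    by (rule meas_cont[OF _ ms]) (intro continuous_intros)
  have nm: "(\<lambda>x::real^'n0. ennreal ((norm x)\<^sup>2)) \<in> borel_measurable \<mu>"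
    using nr by measurable
  have nr2: "(\<lambda>x::real^'n0. (norm (transpose A *v x))\<^sup>2) \<in> borel_measurable \<mu>"
    by (rule meas_cont[OF _ ms]) (intro continuous_intros)
  have nm2: "(\<lambda>x::real^'n0. ennreal ((norm (transpose A *v x))\<^sup>2)) \<in> borel_measurable \<mu>"
    using nr2 by measurable
  have fin: "(\<integral>\<^sup>+ x. ennreal ((norm x)\<^sup>2) \<partial>\<mu>) < \<infinity>" using I by simp
  have Mb: "0 \<le> Mbar2sq \<mu>"
    unfolding Mbar2sq_def by (rule onorm_pos_le) simp
  have "(\<integral>\<^sup>+ x. ennreal (a * (norm (transpose A *v x))\<^sup>2 + b * (norm x)\<^sup>2) \<partial>\<mu>) =
     (\<integral>\<^sup>+ x. ennreal a * ennreal ((norm (transpose A *v x))\<^sup>2) + ennreal b * ennreal ((norm x)\<^sup>2) \<partial>\<mu>)"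
    using a b by (intro nn_integral_cong) (simp add: ennreal_plus ennreal_mult)
  also have "\<dots> = (\<integral>\<^sup>+ x. ennreal a * ennreal ((norm (transpose A *v x))\<^sup>2) \<partial>\<mu>) + (\<integral>\<^sup>+ x. ennreal b * ennreal ((norm x)\<^sup>2) \<partial>\<mu>)"
  proof (rule nn_integral_add)
    show "(\<lambda>x. ennreal b * ennreal ((norm x)\<^sup>2)) \<in> borel_measurable \<mu>" using nm by measurable
    show "(\<lambda>x. ennreal a * ennreal ((norm (transpose A *v x))\<^sup>2)) \<in> borel_measurable \<mu>" using nm2 by measurable
  qed
  also have "(\<integral>\<^sup>+ x. ennreal b * ennreal ((norm x)\<^sup>2) \<partial>\<mu>) = ennreal b * ennreal I"
    by (subst nn_integral_cmult[OF nm]) (simp add: I)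
  also have "(\<integral>\<^sup>+ x. ennreal a * ennreal ((norm (transpose A *v x))\<^sup>2) \<partial>\<mu>) =
      ennreal a * (\<integral>\<^sup>+ x. ennreal ((norm (transpose A *v x))\<^sup>2) \<partial>\<mu>)"
    by (rule nn_integral_cmult[OF nm2])
  also have "\<dots> \<le> ennreal a * ennreal (Mbar2sq \<mu> * (norm A)\<^sup>2)"
    by (intro mult_left_mono mbar_bound[OF ms fin]) simp
  finally show ?thesis using a b I0 Mb by (simp add: ennreal_plus ennreal_mult)
qed

lemma case1_real:
  fixes D0 D1 D2 t \<rho>1 \<rho>2 M V m2 :: real
  assumes pos: "0 < D0" "0 < D1" "0 < D2" and t: "0 < t" and r: "0 < \<rho>1" "0 < \<rho>2"
    and M: "0 \<le> M" and V: "0 \<le> V" and m2: "m2 \<le> \<rho>2 * sqrt (2 * D1 * D2)" and m2n: "0 \<le> m2"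
  shows "2 * D2 * (sqrt t * \<rho>2)\<^sup>2 * (D1 * Ms\<^sup>2 + 0) * V + 2 * m2\<^sup>2 * (D1 * (sqrt t * \<rho>1)\<^sup>2) * (D0 * M)
     \<le> 1 * t * ((\<rho>2 * sqrt (2 * D1 * D2))\<^sup>2 * ((\<rho>1 * sqrt (2 * D0 * D1))\<^sup>2 * M + V * Ms\<^sup>2))"
proof -
  have st: "(sqrt t)\<^sup>2 = t" using t by simp
  have s1: "(sqrt (2 * D0 * D1))\<^sup>2 = 2 * D0 * D1" using pos by simp
  have s2: "(sqrt (2 * D1 * D2))\<^sup>2 = 2 * D1 * D2" using pos by simp
  have mm: "m2\<^sup>2 \<le> \<rho>2\<^sup>2 * (2 * D1 * D2)"
  proof -
    have "m2\<^sup>2 \<le> (\<rho>2 * sqrt (2 * D1 * D2))\<^sup>2" using m2 m2n by (intro power_mono) auto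
    then show ?thesis by (simp add: power_mult_distrib s2)
  qed
  have "2 * m2\<^sup>2 * (D1 * (t * \<rho>1\<^sup>2)) * (D0 * M) \<le> 2 * (\<rho>2\<^sup>2 * (2 * D1 * D2)) * (D1 * (t * \<rho>1\<^sup>2)) * (D0 * M)"
  proof -
    have c: "0 \<le> (D1 * (t * \<rho>1\<^sup>2)) * (D0 * M)" using pos t M by simp
    have "2 * m2\<^sup>2 \<le> 2 * (\<rho>2\<^sup>2 * (2 * D1 * D2))" using mm by (simp add: algebra_simps)
    from mult_right_mono[OF this c] show ?thesis by (simp only: mult.assoc)
  qed
  then show ?thesis using pos t
    by (simp add: power_mult_distrib st s1 s2 algebra_simps)
qed

lemma case2_real:
  fixes D0 D1 D2 t \<rho>1 \<rho>2 M Mb m1 m2 :: real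
  assumes pos: "0 < D0" "1 \<le> D1" "0 < D2" and t: "0 < t" "t \<le> 1" and r: "0 < \<rho>1" "0 < \<rho>2"
    and M: "0 \<le> M" and Mb: "0 \<le> Mb"
    and m1: "m1 \<le> \<rho>1 * sqrt (2 * D0 * D1)" and m1n: "0 \<le> m1"
    and m2: "m2 \<le> \<rho>2 * sqrt (2 * D1 * D2)" and m2n: "0 \<le> m2"
  shows "2 * D2 * (sqrt t * \<rho>2)\<^sup>2 * 1 * (Mb * m1\<^sup>2) +
      (2 * D2 * (sqrt t * \<rho>2)\<^sup>2 * 1 * (D1 * (sqrt t * \<rho>1)\<^sup>2) + 2 * m2\<^sup>2 * (D1 * (sqrt t * \<rho>1)\<^sup>2)) * (D0 * M)
     \<le> 3 / 2 * t * ((\<rho>1 * sqrt (2 * D0 * D1))\<^sup>2 * (\<rho>2 * sqrt (2 * D1 * D2))\<^sup>2 * (M + Mb / D1))"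
proof -
  have st: "(sqrt t)\<^sup>2 = t" using t by simp
  have s1: "(sqrt (2 * D0 * D1))\<^sup>2 = 2 * D0 * D1" using pos by simp
  have s2: "(sqrt (2 * D1 * D2))\<^sup>2 = 2 * D1 * D2" using pos by simp
  have mm1: "m1\<^sup>2 \<le> \<rho>1\<^sup>2 * (2 * D0 * D1)"
  proof -
    have "m1\<^sup>2 \<le> (\<rho>1 * sqrt (2 * D0 * D1))\<^sup>2" using m1 m1n by (intro power_mono) auto
    then show ?thesis by (simp add: power_mult_distrib s1)
  qed
  have mm2: "m2\<^sup>2 \<le> \<rho>2\<^sup>2 * (2 * D1 * D2)"
  proof -
    have "m2\<^sup>2 \<le> (\<rho>2 * sqrt (2 * D1 * D2))\<^sup>2" using m2 m2n by (intro power_mono) auto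
    then show ?thesis by (simp add: power_mult_distrib s2)
  qed
  define P where "P = \<rho>1\<^sup>2 * \<rho>2\<^sup>2 * D0 * D2"
  have P0: "0 \<le> P" unfolding P_def using pos by simp
  define u where "u = t * P * D1 * Mb"
  define v where "v = t * P * D1 * D1 * M"
  define w where "w = t * P * D1 * M"
  have u0: "0 \<le> u" unfolding u_def using t P0 pos Mb by simp
  have rhs: "3 / 2 * t * ((\<rho>1 * sqrt (2 * D0 * D1))\<^sup>2 * (\<rho>2 * sqrt (2 * D1 * D2))\<^sup>2 * (M + Mb / D1))
      = 6 * v + 6 * u"
    unfolding P_def u_def v_def using pos by (simp add: power_mult_distrib s1 s2 field_simps)
  have t1: "2 * D2 * (sqrt t * \<rho>2)\<^sup>2 * 1 * (Mb * m1\<^sup>2) \<le> 4 * u"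
  proof -
    have "2 * D2 * (t * \<rho>2\<^sup>2) * (Mb * m1\<^sup>2) \<le> 2 * D2 * (t * \<rho>2\<^sup>2) * (Mb * (\<rho>1\<^sup>2 * (2 * D0 * D1)))"
      using mm1 pos t Mb by (intro mult_left_mono) auto
    then show ?thesis unfolding P_def u_def by (simp add: power_mult_distrib st algebra_simps)
  qed
  have t2: "2 * D2 * (sqrt t * \<rho>2)\<^sup>2 * 1 * (D1 * (sqrt t * \<rho>1)\<^sup>2) * (D0 * M) \<le> 2 * w"
  proof -
    have "2 * D2 * (t * \<rho>2\<^sup>2) * (D1 * (t * \<rho>1\<^sup>2)) * (D0 * M) = t * (2 * w)"
      unfolding P_def w_def by (simp add: algebra_simps)
    also have "\<dots> \<le> 1 * (2 * w)"
      using t P0 pos M unfolding w_def by (intro mult_right_mono) auto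
    finally show ?thesis by (simp add: power_mult_distrib st)
  qed
  have t3: "2 * m2\<^sup>2 * (D1 * (sqrt t * \<rho>1)\<^sup>2) * (D0 * M) \<le> 4 * v"
  proof -
    have "2 * m2\<^sup>2 * (D1 * (t * \<rho>1\<^sup>2)) * (D0 * M) \<le> 2 * (\<rho>2\<^sup>2 * (2 * D1 * D2)) * (D1 * (t * \<rho>1\<^sup>2)) * (D0 * M)"
    proof -
      have c: "0 \<le> (D1 * (t * \<rho>1\<^sup>2)) * (D0 * M)" using pos t M by simp
      have "2 * m2\<^sup>2 \<le> 2 * (\<rho>2\<^sup>2 * (2 * D1 * D2))" using mm2 by (simp add: algebra_simps)
      from mult_right_mono[OF this c] show ?thesis by (simp only: mult.assoc)
    qed
    then show ?thesis unfolding P_def v_def by (simp add: power_mult_distrib st algebra_simps)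
  qed
  have wv: "w \<le> v"
  proof -
    have "t * P * D1 * M * 1 \<le> t * P * D1 * M * D1"
      using pos t P0 M by (intro mult_left_mono) auto
    then show ?thesis unfolding w_def v_def by (simp add: algebra_simps)
  qed
  have dr: "(2 * D2 * (sqrt t * \<rho>2)\<^sup>2 * 1 * (D1 * (sqrt t * \<rho>1)\<^sup>2) + 2 * m2\<^sup>2 * (D1 * (sqrt t * \<rho>1)\<^sup>2)) * (D0 * M)
     = 2 * D2 * (sqrt t * \<rho>2)\<^sup>2 * 1 * (D1 * (sqrt t * \<rho>1)\<^sup>2) * (D0 * M) + 2 * m2\<^sup>2 * (D1 * (sqrt t * \<rho>1)\<^sup>2) * (D0 * M)"
    by (rule distrib_right)
  show ?thesis unfolding rhs dr using t1 t2 t3 wv u0 by linarith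
qed

theorem corollary1:
  fixes X :: "(real^'n0) set" and \<mu> :: "(real^'n0) measure"
    and \<sigma> :: "real \<Rightarrow> real" and \<rho>1 \<rho>2 \<beta> M\<sigma> :: real and n :: nat
  defines "D0 \<equiv> real CARD('n0)" and "D1 \<equiv> real CARD('n1)" and "D2 \<equiv> real CARD('n2)"
  defines "d \<equiv> D0 * D1 + D1 * D2"
  defines "B1 \<equiv> \<rho>1 * sqrt (2 * D0 * D1)" and "B2 \<equiv> \<rho>2 * sqrt (2 * D1 * D2)"
  defines "\<pi> \<equiv> (gauss_prior \<rho>1 \<rho>2 :: ((real^'n1^'n0) \<times> (real^'n2^'n1)) measure)"
  defines "Wb \<equiv> {wb :: (real^'n1^'n0) \<times> (real^'n2^'n1). norm (fst wb) \<le> B1 \<and> norm (snd wb) \<le> B2}"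
  assumes X_borel: "X \<in> sets borel"
    and mu_sets: "sets \<mu> = sets (restrict_space borel X)"
    and mu_sfin: "sigma_finite_measure \<mu>"
    and M2_fin: "(\<integral>\<^sup>+ x. ennreal ((norm x)\<^sup>2) \<partial>\<mu>) < \<infinity>"
    and lip: "\<forall>u v. \<bar>\<sigma> u - \<sigma> v\<bar> \<le> \<bar>u - v\<bar>"
    and rho: "\<rho>1 > 0" "\<rho>2 > 0"
    and beta: "\<beta> > 0" and n: "n \<ge> 1"
  shows "((\<forall>u. \<bar>\<sigma> u\<bar> \<le> M\<sigma>) \<and> emeasure \<mu> X < \<infinity> \<longrightarrow>
            (SUP wb\<in>Wb. Rem \<beta> n X \<mu> \<sigma> \<pi> wb)
              \<le> ennreal (\<beta> * d / real n * ln (3 + 3 * real n * B2\<^sup>2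
                    * (B1\<^sup>2 * M2sq \<mu> + enn2real (emeasure \<mu> X) * M\<sigma>\<^sup>2) / (d * \<beta>))))
       \<and> (\<not> bounded (range \<sigma>) \<and> \<sigma> 0 = 0 \<longrightarrow>
            (SUP wb\<in>Wb. Rem \<beta> n X \<mu> \<sigma> \<pi> wb)
              \<le> ennreal (\<beta> * d / real n * ln (3 + 3 * real n * B1\<^sup>2 * B2\<^sup>2
                    * (M2sq \<mu> + Mbar2sq \<mu> / D1) / (d * \<beta>))))"
proof -
  have D0p: "0 < D0" unfolding D0_def by simp
  have D1p: "1 \<le> D1" unfolding D1_def by (simp add: Suc_leI)
  have D2p: "0 < D2" unfolding D2_def by simp
  have dp: "0 < d" unfolding d_def using D0p D1p D2p by (simp add: add_pos_pos)
  have np: "0 < real n" using n by simp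
  have spX: "space \<mu> = X" using sets_eq_imp_space_eq[OF mu_sets] by (simp add: space_restrict_space)
  define I where "I = enn2real (\<integral>\<^sup>+ x. ennreal ((norm x)\<^sup>2) \<partial>\<mu>)"
  have I0: "0 \<le> I" unfolding I_def by simp
  have Ieq: "(\<integral>\<^sup>+ x. ennreal ((norm x)\<^sup>2) \<partial>\<mu>) = ennreal I" unfolding I_def using M2_fin by simp
  have IM: "I = D0 * M2sq \<mu>" unfolding I_def M2sq_def D0_def by simp
  have M2n: "0 \<le> M2sq \<mu>" unfolding M2sq_def by simp
  have Mbn: "0 \<le> Mbar2sq \<mu>" unfolding Mbar2sq_def by (rule onorm_pos_le) simp
  have Wbd: "norm (fst wb) \<le> \<rho>1 * sqrt (2 * real CARD('n0) * real CARD('n1))"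
    "norm (snd wb) \<le> \<rho>2 * sqrt (2 * real CARD('n1) * real CARD('n2))" if "wb \<in> Wb" for wb
    using that unfolding Wb_def B1_def B2_def D0_def D1_def D2_def by auto
  have dd: "d = real CARD('n0) * real CARD('n1) + real CARD('n1) * real CARD('n2)"
    unfolding d_def D0_def D1_def D2_def ..
  show ?thesis
  proof (intro conjI impI)
    assume A: "(\<forall>u. \<bar>\<sigma> u\<bar> \<le> M\<sigma>) \<and> emeasure \<mu> X < \<infinity>"
    define V where "V = enn2real (emeasure \<mu> X)"
    have V0: "0 \<le> V" unfolding V_def by simp
    have Veq: "emeasure \<mu> (space \<mu>) = ennreal V" unfolding V_def spX using A by simp
    have Ms0: "0 \<le> M\<sigma>" using A by (metis abs_ge_zero order_trans)
    define C where "C = B2\<^sup>2 * (B1\<^sup>2 * M2sq \<mu> + V * M\<sigma>\<^sup>2)"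
    have C0: "0 \<le> C" unfolding C_def using M2n V0 by simp
    define t where "t = 1 / (1 + 2 * 1 * (real n * C / (\<beta> * d)))"
    have a0: "0 \<le> real n * C / (\<beta> * d)" using C0 beta dp by simp
    have tp: "0 < t" unfolding t_def using a0 by simp
    have Kb: "(norm (sigbar \<sigma> z))\<^sup>2 \<le> real CARD('n1) * M\<sigma>\<^sup>2 + 0 * (norm z)\<^sup>2" for z :: "real^'n1"
      using sigbar_bounded[of \<sigma> M\<sigma> z] A by simp
    show "(SUP wb\<in>Wb. Rem \<beta> n X \<mu> \<sigma> \<pi> wb)
              \<le> ennreal (\<beta> * d / real n * ln (3 + 3 * real n * B2\<^sup>2
                    * (B1\<^sup>2 * M2sq \<mu> + enn2real (emeasure \<mu> X) * M\<sigma>\<^sup>2) / (d * \<beta>)))"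
    proof (rule SUP_least)
      fix wb assume wb: "wb \<in> Wb"
      have E: "(\<integral>\<^sup>+ x. ennreal (2 * real CARD('n2) * (sqrt t * \<rho>2)\<^sup>2 * (real CARD('n1) * M\<sigma>\<^sup>2 + 0 * ((norm (transpose (fst wb) *v x))\<^sup>2 + real CARD('n1) * (sqrt t * \<rho>1)\<^sup>2 * (norm x)\<^sup>2))
         + 2 * (norm (snd wb))\<^sup>2 * (real CARD('n1) * (sqrt t * \<rho>1)\<^sup>2 * (norm x)\<^sup>2)) \<partial>\<mu>) \<le> ennreal (1 * t * C)"
      proof -
        have "(\<integral>\<^sup>+ x. ennreal (2 * real CARD('n2) * (sqrt t * \<rho>2)\<^sup>2 * (real CARD('n1) * M\<sigma>\<^sup>2 + 0 * ((norm (transpose (fst wb) *v x))\<^sup>2 + real CARD('n1) * (sqrt t * \<rho>1)\<^sup>2 * (norm x)\<^sup>2))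
         + 2 * (norm (snd wb))\<^sup>2 * (real CARD('n1) * (sqrt t * \<rho>1)\<^sup>2 * (norm x)\<^sup>2)) \<partial>\<mu>) =
          (\<integral>\<^sup>+ x. ennreal (2 * D2 * (sqrt t * \<rho>2)\<^sup>2 * (D1 * M\<sigma>\<^sup>2 + 0) + (2 * (norm (snd wb))\<^sup>2 * (D1 * (sqrt t * \<rho>1)\<^sup>2)) * (norm x)\<^sup>2) \<partial>\<mu>)"
          unfolding D1_def D2_def by (simp only: mult_zero_left mult.assoc)
        also have "\<dots> = ennreal (2 * D2 * (sqrt t * \<rho>2)\<^sup>2 * (D1 * M\<sigma>\<^sup>2 + 0) * V + (2 * (norm (snd wb))\<^sup>2 * (D1 * (sqrt t * \<rho>1)\<^sup>2)) * I)"
          using D1p D2p by (intro nn_int_affine[OF mu_sets Ieq I0 _ _ Veq V0]) auto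
        also have "\<dots> \<le> ennreal (1 * t * C)"
          unfolding IM C_def B1_def B2_def
          by (intro ennreal_leI case1_real[OF D0p _ D2p tp rho M2n V0]) (use D1p Wbd(2)[OF wb] in \<open>simp_all add: D1_def D2_def\<close>)
        finally show ?thesis .
      qed
      have "Rem \<beta> n X \<mu> \<sigma> \<pi> wb \<le> ennreal (1 * t * C + \<beta> / real n * (d * (t + 1 - ln t) / 2))"
        unfolding \<pi>_def dd
        by (rule rem_bound[OF lip mu_sets mu_sfin rho beta tp Kb _ _ Wbd[OF wb] _ E]) (use C0 tp in simp_all)
      also have "\<dots> \<le> ennreal (\<beta> * d / real n * ln (3 + 3 * real n * C / (d * \<beta>)))"
        by (rule ennreal_leI) (unfold t_def, rule final_ineq[OF C0 beta dp np], simp_all)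
      also have "3 * real n * C = 3 * real n * B2\<^sup>2 * (B1\<^sup>2 * M2sq \<mu> + enn2real (emeasure \<mu> X) * M\<sigma>\<^sup>2)"
        unfolding C_def V_def by (simp only: mult.assoc)
      finally show "Rem \<beta> n X \<mu> \<sigma> \<pi> wb \<le> ennreal (\<beta> * d / real n * ln (3 + 3 * real n * B2\<^sup>2
                    * (B1\<^sup>2 * M2sq \<mu> + enn2real (emeasure \<mu> X) * M\<sigma>\<^sup>2) / (d * \<beta>)))" .
    qed
  next
    assume A: "\<not> bounded (range \<sigma>) \<and> \<sigma> 0 = 0"
    define C where "C = B1\<^sup>2 * B2\<^sup>2 * (M2sq \<mu> + Mbar2sq \<mu> / D1)"
    have C0: "0 \<le> C" unfolding C_def using M2n Mbn D1p by simp
    define t where "t = 1 / (1 + 2 * (3 / 2) * (real n * C / (\<beta> * d)))"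
    have a0: "0 \<le> real n * C / (\<beta> * d)" using C0 beta dp by simp
    have tp: "0 < t" unfolding t_def using a0 by (simp add: add_pos_nonneg)
    have t1: "t \<le> 1"
    proof -
      define q where "q = real n * C / (\<beta> * d)"
      have q0: "0 \<le> q" unfolding q_def by (rule a0)
      have "1 \<le> 1 + 2 * (3 / 2) * q" using q0 by simp
      then have "1 / (1 + 2 * (3 / 2) * q) \<le> 1" by (auto simp: divide_le_eq_1)
      then show ?thesis unfolding t_def q_def .
    qed
    have Kb: "(norm (sigbar \<sigma> z))\<^sup>2 \<le> 0 + 1 * (norm z)\<^sup>2" for z :: "real^'n1"
      using sigbar_zero[OF lip, of z] A by simp
    show "(SUP wb\<in>Wb. Rem \<beta> n X \<mu> \<sigma> \<pi> wb)
              \<le> ennreal (\<beta> * d / real n * ln (3 + 3 * real n * B1\<^sup>2 * B2\<^sup>2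
                    * (M2sq \<mu> + Mbar2sq \<mu> / D1) / (d * \<beta>)))"
    proof (rule SUP_least)
      fix wb assume wb: "wb \<in> Wb"
      have E: "(\<integral>\<^sup>+ x. ennreal (2 * real CARD('n2) * (sqrt t * \<rho>2)\<^sup>2 * (0 + 1 * ((norm (transpose (fst wb) *v x))\<^sup>2 + real CARD('n1) * (sqrt t * \<rho>1)\<^sup>2 * (norm x)\<^sup>2))
         + 2 * (norm (snd wb))\<^sup>2 * (real CARD('n1) * (sqrt t * \<rho>1)\<^sup>2 * (norm x)\<^sup>2)) \<partial>\<mu>) \<le> ennreal (3 / 2 * t * C)"
      proof -
        define a where "a = 2 * D2 * (sqrt t * \<rho>2)\<^sup>2 * 1"
        define b where "b = 2 * D2 * (sqrt t * \<rho>2)\<^sup>2 * 1 * (D1 * (sqrt t * \<rho>1)\<^sup>2) + 2 * (norm (snd wb))\<^sup>2 * (D1 * (sqrt t * \<rho>1)\<^sup>2)"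
        have a0: "0 \<le> a" unfolding a_def using D2p by simp
        have b0: "0 \<le> b" unfolding b_def using D2p D1p by simp
        have "(\<integral>\<^sup>+ x. ennreal (2 * real CARD('n2) * (sqrt t * \<rho>2)\<^sup>2 * (0 + 1 * ((norm (transpose (fst wb) *v x))\<^sup>2 + real CARD('n1) * (sqrt t * \<rho>1)\<^sup>2 * (norm x)\<^sup>2))
         + 2 * (norm (snd wb))\<^sup>2 * (real CARD('n1) * (sqrt t * \<rho>1)\<^sup>2 * (norm x)\<^sup>2)) \<partial>\<mu>) =
          (\<integral>\<^sup>+ x. ennreal (a * (norm (transpose (fst wb) *v x))\<^sup>2 + b * (norm x)\<^sup>2) \<partial>\<mu>)"
          unfolding a_def b_def D1_def D2_def by (intro nn_integral_cong arg_cong[where f=ennreal]) (simp only: algebra_simps)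
        also have "\<dots> \<le> ennreal (a * (Mbar2sq \<mu> * (norm (fst wb))\<^sup>2) + b * I)"
          by (rule nn_int_case2[OF mu_sets Ieq I0 a0 b0])
        also have "\<dots> \<le> ennreal (3 / 2 * t * C)"
          unfolding IM C_def B1_def B2_def a_def b_def
          by (intro ennreal_leI case2_real[OF D0p D1p D2p tp t1 rho M2n Mbn]) (use Wbd[OF wb] in \<open>simp_all add: D0_def D1_def D2_def\<close>)
        finally show ?thesis .
      qed
      have "Rem \<beta> n X \<mu> \<sigma> \<pi> wb \<le> ennreal (3 / 2 * t * C + \<beta> / real n * (d * (t + 1 - ln t) / 2))"
        unfolding \<pi>_def dd
        by (rule rem_bound[OF lip mu_sets mu_sfin rho beta tp Kb _ _ Wbd[OF wb] _ E]) (use C0 tp in simp_all)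
      also have "\<dots> \<le> ennreal (\<beta> * d / real n * ln (3 + 3 * real n * C / (d * \<beta>)))"
        by (rule ennreal_leI) (unfold t_def, rule final_ineq[OF C0 beta dp np], simp_all)
      also have "3 * real n * C = 3 * real n * B1\<^sup>2 * B2\<^sup>2 * (M2sq \<mu> + Mbar2sq \<mu> / D1)"
        unfolding C_def by (simp only: mult.assoc)
      finally show "Rem \<beta> n X \<mu> \<sigma> \<pi> wb \<le> ennreal (\<beta> * d / real n * ln (3 + 3 * real n * B1\<^sup>2 * B2\<^sup>2
                    * (M2sq \<mu> + Mbar2sq \<mu> / D1) / (d * \<beta>)))" .
    qed
  qed
qed

end
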